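(* On $\overline{K}$ the following three $\sigma$-algebras coincide: the Borel $\sigma$-algebra $\mathcal{B}(\overline{K})$ of the strong (Fréchet) topology defined by the seminorms $\|y\|_n$; the Borel $\sigma$-algebra $\mathcal{B}(\overline{K},K)$ of the $*$-weak topology $\sigma(\overline{K},K)$; and the smallest $\sigma$-algebra $\mathcal{A}(\overline{K})$ with respect to which all continuous linear functionals $\overline{K}\to k$ are measurable.
   Context: Let $k$ be a non-Archimedean local field of characteristic $0$, and let $k=K_1\subset K_2\subset\cdots$ be an increasing sequence of finite extensions, $K=\bigcup_n K_n$. Let $m_n=[K_n:k]$, $|\cdot|_n$ the normalized absolute value of $K_n$, $\|x\|=|x|_n^{1/m_n}$ for $x\in K_n$. For $n\le\nu$ and $x\in K_\nu$ put $T_n(x)=\frac{m_n}{m_\nu}\mathrm{Tr}_{K_\nu/K_n}(x)$; $T=T_1$. $\overline{K}$ is the set of sequences $y=(y_1,y_2,\dots)$, $y_n\in K_n$, with $y_n=T_n(y_\nu)$ for $\nu>n$, topologized by the seminorms $\|y\|_n=\|y_n\|$; $T_n(y):=y_n$. The pairing is $\langle\xi,y\rangle=T(\xi\,T_n(y))$ for $\xi\in K_n$, $y\in\overline{K}$; the $*$-weak topology on $\overline K$ is the weakest one making all $y\mapsto\langle\xi,y\rangle$, $\xi\in K$, continuous. *)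

theory Defs
  imports "HOL-Analysis.Analysis"
begin

definition is_subfield :: "'a::field set \<Rightarrow> bool" where
  "is_subfield F \<longleftrightarrow> 0 \<in> F \<and> 1 \<in> F \<and>
     (\<forall>x\<in>F. \<forall>y\<in>F. x + y \<in> F \<and> x - y \<in> F \<and> x * y \<in> F) \<and>
     (\<forall>x\<in>F. x \<noteq> 0 \<longrightarrow> inverse x \<in> F)"

definition lin_span :: "'a::field set \<Rightarrow> 'a list \<Rightarrow> 'a set" where
  "lin_span F bs = {(\<Sum>i<length bs. c i * bs ! i) | c. \<forall>i<length bs. c i \<in> F}"

definition lin_indep :: "'a::field set \<Rightarrow> 'a list \<Rightarrow> bool" where
  "lin_indep F bs \<longleftrightarrow> (\<forall>c. (\<forall>i<length bs. c i \<in> F) \<longrightarrow>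
       (\<Sum>i<length bs. c i * bs ! i) = 0 \<longrightarrow> (\<forall>i<length bs. c i = 0))"

definition is_basis :: "'a::field set \<Rightarrow> 'a set \<Rightarrow> 'a list \<Rightarrow> bool" where
  "is_basis F L bs \<longleftrightarrow> set bs \<subseteq> L \<and> lin_indep F bs \<and> lin_span F bs = L"

definition finite_ext :: "'a::field set \<Rightarrow> 'a set \<Rightarrow> bool" where
  "finite_ext F L \<longleftrightarrow> is_subfield F \<and> is_subfield L \<and> F \<subseteq> L \<and> (\<exists>bs. is_basis F L bs)"

definition ext_degree :: "'a::field set \<Rightarrow> 'a set \<Rightarrow> nat" where
  "ext_degree F L = length (SOME bs. is_basis F L bs)"

definition coords :: "'a::field set \<Rightarrow> 'a list \<Rightarrow> 'a \<Rightarrow> nat \<Rightarrow> 'a" where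
  "coords F bs y = (THE c. (\<forall>i<length bs. c i \<in> F) \<and> (\<forall>i\<ge>length bs. c i = 0) \<and>
                         y = (\<Sum>i<length bs. c i * bs ! i))"

text \<open>Trace \<open>Tr_{L/F}(x)\<close>: trace of the \<open>F\<close>-linear map \<open>y \<mapsto> x y\<close> on \<open>L\<close>.\<close>
definition field_trace :: "'a::field set \<Rightarrow> 'a set \<Rightarrow> 'a \<Rightarrow> 'a" where
  "field_trace F L x = (let bs = (SOME bs. is_basis F L bs) in
      \<Sum>i<length bs. coords F bs (x * bs ! i) i)"

definition nonarch_absval :: "'a::field set \<Rightarrow> ('a \<Rightarrow> real) \<Rightarrow> bool" where
  "nonarch_absval F a \<longleftrightarrow>
     (\<forall>x\<in>F. a x \<ge> 0 \<and> (a x = 0 \<longleftrightarrow> x = 0)) \<and>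
     (\<forall>x\<in>F. \<forall>y\<in>F. a (x * y) = a x * a y \<and> a (x + y) \<le> max (a x) (a y))"

definition complete_absval :: "'a::field set \<Rightarrow> ('a \<Rightarrow> real) \<Rightarrow> bool" where
  "complete_absval F a \<longleftrightarrow> (\<forall>s. (\<forall>n. s n \<in> F) \<longrightarrow>
      (\<forall>e>0. \<exists>N::nat. \<forall>m\<ge>N. \<forall>n\<ge>N. a (s m - s n) < e) \<longrightarrow>
      (\<exists>l\<in>F. \<forall>e>0. \<exists>N::nat. \<forall>n\<ge>N. a (s n - l) < e))"

definition residue_field :: "'a::field set \<Rightarrow> ('a \<Rightarrow> real) \<Rightarrow> 'a set set" where
  "residue_field F a = {x\<in>F. a x \<le> 1} // {(x, y). x \<in> F \<and> y \<in> F \<and> a x \<le> 1 \<and> a y \<le> 1 \<and> a (x - y) < 1}"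

text \<open>\<open>a\<close> is the normalized absolute value of the non-Archimedean local field \<open>F\<close>:
  \<open>F\<close> is complete w.r.t. the non-Archimedean absolute value \<open>a\<close>, the residue field is finite
  with \<open>q\<close> elements, and the value group is \<open>q^\<int>\<close> (i.e. \<open>|x| = q^{-v(x)}\<close> for the normalized
  discrete valuation \<open>v\<close>).\<close>
definition normalized_local_field :: "'a::field set \<Rightarrow> ('a \<Rightarrow> real) \<Rightarrow> bool" where
  "normalized_local_field F a \<longleftrightarrow> is_subfield F \<and> nonarch_absval F a \<and> complete_absval F a \<and>
     finite (residue_field F a) \<and>
     a ` (F - {0}) = {(real (card (residue_field F a))) powi i | i. True}"

text \<open>Indices start at 0: \<open>K 0 = k\<close>.  \<open>m n = [K_n : k]\<close>.\<close>
definition mdeg :: "(nat \<Rightarrow> 'a::field set) \<Rightarrow> nat \<Rightarrow> nat" where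
  "mdeg K n = ext_degree (K 0) (K n)"

definition Tn :: "(nat \<Rightarrow> 'a::field_char_0 set) \<Rightarrow> nat \<Rightarrow> nat \<Rightarrow> 'a \<Rightarrow> 'a" where
  "Tn K n \<nu> x = (of_nat (mdeg K n) / of_nat (mdeg K \<nu>)) * field_trace (K n) (K \<nu>) x"

definition Kbar :: "(nat \<Rightarrow> 'a::field_char_0 set) \<Rightarrow> (nat \<Rightarrow> 'a) set" where
  "Kbar K = {y. (\<forall>n. y n \<in> K n) \<and> (\<forall>n \<nu>. n < \<nu> \<longrightarrow> y n = Tn K n \<nu> (y \<nu>))}"

definition seminorm :: "(nat \<Rightarrow> 'a::field_char_0 set) \<Rightarrow> (nat \<Rightarrow> 'a \<Rightarrow> real) \<Rightarrow> nat \<Rightarrow> (nat \<Rightarrow> 'a) \<Rightarrow> real" where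
  "seminorm K nabs n y = nabs n (y n) powr (1 / real (mdeg K n))"

definition strong_top :: "(nat \<Rightarrow> 'a::field_char_0 set) \<Rightarrow> (nat \<Rightarrow> 'a \<Rightarrow> real) \<Rightarrow> (nat \<Rightarrow> 'a) topology" where
  "strong_top K nabs = topology_generated_by
     (insert (Kbar K) {{z \<in> Kbar K. seminorm K nabs n (\<lambda>i. z i - y i) < r} | n y r. y \<in> Kbar K \<and> r > 0})"

definition k_top :: "'a::field set \<Rightarrow> ('a \<Rightarrow> real) \<Rightarrow> 'a topology" where
  "k_top k a = topology_generated_by (insert k {{z \<in> k. a (z - x) < r} | x r. x \<in> k \<and> r > 0})"

text \<open>The pairing \<open>\<langle>\<xi>,y\<rangle> = T(\<xi> T_n(y))\<close> for \<open>\<xi> \<in> K_n\<close> (independent of \<open>n\<close>; we take the least).\<close>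
definition pairing :: "(nat \<Rightarrow> 'a::field_char_0 set) \<Rightarrow> 'a \<Rightarrow> (nat \<Rightarrow> 'a) \<Rightarrow> 'a" where
  "pairing K \<xi> y = (let n = (LEAST n. \<xi> \<in> K n) in Tn K 0 n (\<xi> * y n))"

definition weak_top :: "(nat \<Rightarrow> 'a::field_char_0 set) \<Rightarrow> (nat \<Rightarrow> 'a \<Rightarrow> real) \<Rightarrow> (nat \<Rightarrow> 'a) topology" where
  "weak_top K nabs = topology_generated_by
     (insert (Kbar K) {{y \<in> Kbar K. pairing K \<xi> y \<in> U} | \<xi> U. \<xi> \<in> (\<Union>n. K n) \<and> openin (k_top (K 0) (nabs 0)) U})"

definition borel_sets :: "'b topology \<Rightarrow> 'b set set" where
  "borel_sets X = sigma_sets (topspace X) {U. openin X U}"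

definition cont_lin_functionals :: "(nat \<Rightarrow> 'a::field_char_0 set) \<Rightarrow> (nat \<Rightarrow> 'a \<Rightarrow> real) \<Rightarrow> ((nat \<Rightarrow> 'a) \<Rightarrow> 'a) set" where
  "cont_lin_functionals K nabs = {f.
     (\<forall>y\<in>Kbar K. f y \<in> K 0) \<and>
     (\<forall>c\<in>K 0. \<forall>y\<in>Kbar K. \<forall>z\<in>Kbar K. f (\<lambda>n. c * y n + z n) = c * f y + f z) \<and>
     continuous_map (strong_top K nabs) (k_top (K 0) (nabs 0)) f}"

definition A_sigma :: "(nat \<Rightarrow> 'a::field_char_0 set) \<Rightarrow> (nat \<Rightarrow> 'a \<Rightarrow> real) \<Rightarrow> (nat \<Rightarrow> 'a) set set" where
  "A_sigma K nabs = sigma_sets (Kbar K)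
     {{y \<in> Kbar K. f y \<in> B} | f B. f \<in> cont_lin_functionals K nabs \<and> B \<in> borel_sets (k_top (K 0) (nabs 0))}"

end

theory Submission
  imports Defs
begin

lemma sf_0: "is_subfield F \<Longrightarrow> 0 \<in> F" by (simp add: is_subfield_def)
lemma sf_1: "is_subfield F \<Longrightarrow> 1 \<in> F" by (simp add: is_subfield_def)
lemma sf_add: "is_subfield F \<Longrightarrow> x \<in> F \<Longrightarrow> y \<in> F \<Longrightarrow> x + y \<in> F" by (simp add: is_subfield_def)
lemma sf_diff: "is_subfield F \<Longrightarrow> x \<in> F \<Longrightarrow> y \<in> F \<Longrightarrow> x - y \<in> F" by (simp add: is_subfield_def)
lemma sf_mult: "is_subfield F \<Longrightarrow> x \<in> F \<Longrightarrow> y \<in> F \<Longrightarrow> x * y \<in> F" by (simp add: is_subfield_def)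
lemma sf_uminus: "is_subfield F \<Longrightarrow> x \<in> F \<Longrightarrow> - x \<in> F"
  using sf_diff[of F 0 x] sf_0[of F] by simp
lemma sf_inverse: "is_subfield F \<Longrightarrow> x \<in> F \<Longrightarrow> inverse x \<in> F"
  by (cases "x = 0") (auto simp: is_subfield_def)
lemma sf_divide: "is_subfield F \<Longrightarrow> x \<in> F \<Longrightarrow> y \<in> F \<Longrightarrow> x / y \<in> F"
  by (simp add: divide_inverse sf_mult sf_inverse)
lemma sf_of_nat: "is_subfield F \<Longrightarrow> of_nat n \<in> F"
  by (induction n) (auto simp: sf_0 sf_1 sf_add)
lemma sf_sum: "is_subfield F \<Longrightarrow> (\<And>i. i \<in> A \<Longrightarrow> f i \<in> F) \<Longrightarrow> sum f A \<in> F"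
  by (induction A rule: infinite_finite_induct) (auto simp: sf_0 sf_add)

lemmas sf_closed = sf_0 sf_1 sf_add sf_diff sf_mult sf_uminus sf_inverse sf_divide sf_of_nat

section \<open>Bases and coordinates\<close>

definition lc :: "'a::field list \<Rightarrow> (nat \<Rightarrow> 'a) \<Rightarrow> 'a" where
  "lc bs c = (\<Sum>i<length bs. c i * bs ! i)"

lemma lc_in:
  assumes "is_subfield L" "F \<subseteq> L" "set bs \<subseteq> L" "\<forall>i<length bs. c i \<in> F"
  shows "lc bs c \<in> L"
  unfolding lc_def using assms
  by (intro sf_sum) (auto intro!: sf_mult)

lemma lc_add: "lc bs (\<lambda>i. a * c i + d i) = a * lc bs c + lc bs d"
  by (simp add: lc_def algebra_simps sum.distrib sum_distrib_left)

lemma lc_cong: "(\<And>i. i < length bs \<Longrightarrow> c i = d i) \<Longrightarrow> lc bs c = lc bs d"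
  by (simp add: lc_def)

locale basis_ctx =
  fixes F L :: "'a::field set" and bs :: "'a list"
  assumes F: "is_subfield F" and L: "is_subfield L" and FL: "F \<subseteq> L"
    and B: "is_basis F L bs"
begin

lemma bs_in: "set bs \<subseteq> L" using B by (simp add: is_basis_def)

lemma indep: "(\<forall>i<length bs. c i \<in> F) \<Longrightarrow> lc bs c = 0 \<Longrightarrow> i < length bs \<Longrightarrow> c i = 0"
  using B unfolding is_basis_def lin_indep_def lc_def by blast

lemma span: "x \<in> L \<Longrightarrow> \<exists>c. (\<forall>i<length bs. c i \<in> F) \<and> x = lc bs c"
  using B unfolding is_basis_def lin_span_def lc_def by blast

lemma lc_inj:
  assumes "\<forall>i<length bs. c i \<in> F" "\<forall>i<length bs. d i \<in> F" "lc bs c = lc bs d" "i < length bs"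
  shows "c i = d i"
proof -
  have "lc bs (\<lambda>i. c i - d i) = lc bs c - lc bs d"
    by (simp add: lc_def algebra_simps sum_subtractf)
  then have "lc bs (\<lambda>i. c i - d i) = 0" using assms by simp
  moreover have "\<forall>i<length bs. c i - d i \<in> F" using assms F by (auto intro: sf_diff)
  ultimately show ?thesis using indep[of "\<lambda>i. c i - d i" i] assms by auto
qed

lemma coords_spec:
  assumes "x \<in> L"
  shows "(\<forall>i<length bs. coords F bs x i \<in> F) \<and> (\<forall>i\<ge>length bs. coords F bs x i = 0)
     \<and> x = lc bs (coords F bs x)"
proof -
  obtain c where c: "\<forall>i<length bs. c i \<in> F" "x = lc bs c" using span[OF assms] by blast
  define c' where "c' i = (if i < length bs then c i else 0)" for i
  have c': "(\<forall>i<length bs. c' i \<in> F) \<and> (\<forall>i\<ge>length bs. c' i = 0) \<and> x = lc bs c'"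
    using c unfolding c'_def by (auto intro: lc_cong)
  have "(\<forall>i<length bs. d i \<in> F) \<and> (\<forall>i\<ge>length bs. d i = 0) \<and> x = (\<Sum>i<length bs. d i * bs ! i)
        \<Longrightarrow> d = c'" for d
  proof
    fix i assume d: "(\<forall>i<length bs. d i \<in> F) \<and> (\<forall>i\<ge>length bs. d i = 0) \<and> x = (\<Sum>i<length bs. d i * bs ! i)"
    show "d i = c' i"
    proof (cases "i < length bs")
      case True then show ?thesis using lc_inj[of d c' i] d c' by (auto simp: lc_def)
    next
      case False then show ?thesis using d c' by auto
    qed
  qed
  then have "coords F bs x = c'" unfolding coords_def
    using c' by (intro the_equality) (auto simp: lc_def)
  then show ?thesis using c' by simp
qed

lemma coords_in: "x \<in> L \<Longrightarrow> coords F bs x i \<in> F"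
  using coords_spec[of x] F by (cases "i < length bs") (auto intro: sf_0)

lemma coords_out: "x \<in> L \<Longrightarrow> i \<ge> length bs \<Longrightarrow> coords F bs x i = 0"
  using coords_spec by blast

lemma coords_lc: "x \<in> L \<Longrightarrow> x = lc bs (coords F bs x)"
  using coords_spec by blast

lemma coords_unique:
  assumes "\<forall>i<length bs. c i \<in> F" "x = lc bs c" "i < length bs"
  shows "coords F bs x i = c i"
proof -
  have x: "x \<in> L" using assms lc_in[OF L FL bs_in] by simp
  show ?thesis using lc_inj[of "coords F bs x" c i] coords_spec[OF x] assms by auto
qed

lemma coords_lin:
  assumes "a \<in> F" "x \<in> L" "y \<in> L"
  shows "coords F bs (a * x + y) i = a * coords F bs x i + coords F bs y i"
proof (cases "i < length bs")
  case True
  have hx: "lc bs (coords F bs x) = x" using coords_lc[OF assms(2)] by (rule sym)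
  have hy: "lc bs (coords F bs y) = y" using coords_lc[OF assms(3)] by (rule sym)
  have "a * x + y = lc bs (\<lambda>i. a * coords F bs x i + coords F bs y i)"
    by (simp add: lc_add hx hy)
  moreover have "\<forall>i<length bs. a * coords F bs x i + coords F bs y i \<in> F"
    using assms F coords_in sf_add sf_mult by blast
  ultimately show ?thesis using True coords_unique[of "\<lambda>i. a * coords F bs x i + coords F bs y i" "a * x + y" i]
    by blast
next
  case False
  have "a * x + y \<in> L" using assms L FL sf_add sf_mult by blast
  then show ?thesis using False coords_out[of _ i] assms by simp
qed

lemma coords_bs:
  assumes "j < length bs" "i < length bs"
  shows "coords F bs (bs ! j) i = (if i = j then 1 else 0)"
proof -
  have "(\<Sum>i<length bs. (if i = j then 1 else 0) * bs ! i) = (\<Sum>i<length bs. if i = j then bs ! i else 0)"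
    by (rule sum.cong) auto
  then have "bs ! j = lc bs (\<lambda>i. if i = j then 1 else 0)"
    unfolding lc_def using assms by simp
  moreover have "\<forall>i<length bs. (if i = j then 1 else 0) \<in> F" using F by (simp add: sf_0 sf_1)
  ultimately show ?thesis using coords_unique[of "\<lambda>i. if i = j then 1 else 0" "bs ! j" i] assms
    by simp
qed

lemma bs_nonempty: "bs \<noteq> []"
proof
  assume "bs = []"
  then have "lc bs (coords F bs 1) = 1" using coords_lc[of 1] L sf_1 by metis
  with \<open>bs = []\<close> show False by (simp add: lc_def)
qed

end

lemma fe_basis: "finite_ext F L \<Longrightarrow> basis_ctx F L (SOME bs. is_basis F L bs)"
  unfolding finite_ext_def basis_ctx_def by (metis someI_ex)

lemma ft_def2: "field_trace F L x = (\<Sum>i<length (SOME bs. is_basis F L bs).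
     coords F (SOME bs. is_basis F L bs) (x * (SOME bs. is_basis F L bs) ! i) i)"
  unfolding field_trace_def Let_def by simp

lemma fe_sub: "finite_ext F L \<Longrightarrow> is_subfield F \<and> is_subfield L \<and> F \<subseteq> L"
  unfolding finite_ext_def by blast

lemma ft_in: assumes "finite_ext F L" "x \<in> L" shows "field_trace F L x \<in> F"
proof -
  interpret basis_ctx F L "SOME bs. is_basis F L bs" using fe_basis[OF assms(1)] .
  show ?thesis unfolding ft_def2 using assms bs_in L
    by (intro sf_sum[OF F] coords_in) (auto intro!: sf_mult)
qed

lemma ft_lin: assumes "finite_ext F L" "a \<in> F" "x \<in> L" "y \<in> L"
  shows "field_trace F L (a * x + y) = a * field_trace F L x + field_trace F L y"
proof -
  interpret basis_ctx F L "SOME bs. is_basis F L bs" using fe_basis[OF assms(1)] .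
  let ?bs = "SOME bs. is_basis F L bs"
  have "coords F ?bs ((a * x + y) * ?bs ! i) i = a * coords F ?bs (x * ?bs ! i) i + coords F ?bs (y * ?bs ! i) i"
    if "i < length ?bs" for i
  proof -
    have b: "?bs ! i \<in> L" using bs_in that by auto
    have "(a * x + y) * ?bs ! i = a * (x * ?bs ! i) + y * ?bs ! i" by (simp add: algebra_simps)
    moreover have "x * ?bs ! i \<in> L" "y * ?bs ! i \<in> L" using b assms L sf_mult by blast+
    ultimately show ?thesis using coords_lin assms by simp
  qed
  then show ?thesis unfolding ft_def2 by (simp add: sum.distrib sum_distrib_left)
qed

lemma ft_zero: assumes "finite_ext F L" shows "field_trace F L 0 = 0"
proof -
  have "0 \<in> F" "0 \<in> L" "1 \<in> F" using fe_sub[OF assms] sf_0 sf_1 by blast+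
  then have "field_trace F L (1 * 0 + 0) = 1 * field_trace F L 0 + field_trace F L 0"
    using ft_lin[OF assms] by blast
  then have "field_trace F L 0 = field_trace F L 0 + field_trace F L 0" by (simp only: mult_1 add_0_right)
  then show ?thesis by (metis add_cancel_left_right)
qed

lemma ft_scale: assumes "finite_ext F L" "a \<in> F" "x \<in> L"
  shows "field_trace F L (a * x) = a * field_trace F L x"
  using ft_lin[OF assms, of 0] ft_zero[OF assms(1)] fe_sub[OF assms(1)] sf_0 by fastforce

lemma ft_add: assumes "finite_ext F L" "x \<in> L" "y \<in> L"
  shows "field_trace F L (x + y) = field_trace F L x + field_trace F L y"
  using ft_lin[OF assms(1) _ assms(2,3), of 1] fe_sub[OF assms(1)] sf_1 by fastforce

lemma ft_sum: assumes "finite_ext F L" "finite S" "\<And>j. j \<in> S \<Longrightarrow> a j \<in> F" "\<And>j. j \<in> S \<Longrightarrow> y j \<in> L"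
  shows "field_trace F L (\<Sum>j\<in>S. a j * y j) = (\<Sum>j\<in>S. a j * field_trace F L (y j))"
  using assms(2-4)
proof (induction S rule: finite_induct)
  case empty then show ?case using ft_zero[OF assms(1)] by simp
next
  case (insert j S)
  have sub: "is_subfield F" "is_subfield L" "F \<subseteq> L" using fe_sub[OF assms(1)] by auto
  have "(\<Sum>j\<in>S. a j * y j) \<in> L" using insert.prems sub
    by (intro sf_sum) (auto intro!: sf_mult)
  then show ?case using insert ft_lin[OF assms(1), of "a j" "y j" "\<Sum>j\<in>S. a j * y j"] by simp
qed

lemma ft_one: assumes "finite_ext F L" shows "field_trace F L 1 = of_nat (ext_degree F L)"
proof -
  interpret basis_ctx F L "SOME bs. is_basis F L bs" using fe_basis[OF assms(1)] .
  have "field_trace F L 1 = (\<Sum>i<length (SOME bs. is_basis F L bs). 1)"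
    unfolding ft_def2 by (intro sum.cong refl) (simp add: coords_bs)
  then show ?thesis by (simp add: ext_degree_def)
qed

lemma ext_degree_pos: assumes "finite_ext F L" shows "ext_degree F L > 0"
proof -
  interpret basis_ctx F L "SOME bs. is_basis F L bs" using fe_basis[OF assms(1)] .
  show ?thesis using bs_nonempty by (simp add: ext_degree_def)
qed

lemma ft_one_nz: assumes "finite_ext F (L::'a::field_char_0 set)" shows "field_trace F L 1 \<noteq> 0"
  using ft_one[OF assms] ext_degree_pos[OF assms] by simp

section \<open>Homogeneous linear systems\<close>

lemma homog:
  fixes A :: "nat \<Rightarrow> 'b \<Rightarrow> 'a::field"
  assumes "is_subfield F" "finite J" "e < card J" "\<forall>l<e. \<forall>j\<in>J. A l j \<in> F"
  shows "\<exists>x. (\<forall>j\<in>J. x j \<in> F) \<and> (\<exists>j\<in>J. x j \<noteq> 0) \<and> (\<forall>l<e. (\<Sum>j\<in>J. A l j * x j) = 0)"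
  using assms(2-4)
proof (induction e arbitrary: J A)
  case 0
  then obtain j0 where "j0 \<in> J" by fastforce
  then show ?case using assms(1)
    by (intro exI[of _ "\<lambda>j. if j = j0 then 1 else 0"]) (auto simp: sf_0 sf_1)
next
  case (Suc e)
  show ?case
  proof (cases "\<forall>j\<in>J. A e j = 0")
    case True
    obtain x where x: "(\<forall>j\<in>J. x j \<in> F)" "(\<exists>j\<in>J. x j \<noteq> 0)" "(\<forall>l<e. (\<Sum>j\<in>J. A l j * x j) = 0)"
      using Suc.IH[of J A] Suc.prems by auto
    have "(\<Sum>j\<in>J. A e j * x j) = 0" using True by simp
    then have "\<forall>l<Suc e. (\<Sum>j\<in>J. A l j * x j) = 0" using x(3) less_Suc_eq by auto
    then show ?thesis using x by blast
  next
    case False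
    then obtain p where p: "p \<in> J" "A e p \<noteq> 0" by blast
    define J' where "J' = J - {p}"
    define A' where "A' l j = A l j - A l p * A e j / A e p" for l j
    have cJ': "e < card J'" using Suc.prems p unfolding J'_def by (simp add: card_Diff_singleton)
    have AF: "\<forall>l<e. \<forall>j\<in>J'. A' l j \<in> F"
      unfolding A'_def J'_def using Suc.prems p assms(1)
      by (auto intro!: sf_diff sf_mult sf_divide)
    obtain x' where x': "(\<forall>j\<in>J'. x' j \<in> F)" "(\<exists>j\<in>J'. x' j \<noteq> 0)" "(\<forall>l<e. (\<Sum>j\<in>J'. A' l j * x' j) = 0)"
      using Suc.IH[of J' A'] cJ' AF Suc.prems(1) unfolding J'_def by auto
    define s where "s = (\<Sum>j\<in>J'. A e j * x' j)"
    define x where "x j = (if j = p then - s / A e p else x' j)" for j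
    have sumx: "(\<Sum>j\<in>J. B j * x j) = B p * (- s / A e p) + (\<Sum>j\<in>J'. B j * x' j)" for B
    proof -
      have "(\<Sum>j\<in>J. B j * x j) = B p * x p + (\<Sum>j\<in>J'. B j * x j)"
        unfolding J'_def using p Suc.prems(1) by (simp add: sum.remove)
      moreover have "(\<Sum>j\<in>J'. B j * x j) = (\<Sum>j\<in>J'. B j * x' j)"
        unfolding J'_def x_def by (intro sum.cong) auto
      ultimately show ?thesis unfolding x_def by simp
    qed
    have "(\<Sum>j\<in>J. A l j * x j) = 0" if "l < Suc e" for l
    proof (cases "l = e")
      case True
      then show ?thesis using sumx[of "A e"] p unfolding s_def by (simp add: field_simps)
    next
      case False
      then have l: "l < e" using that by simp
      have "(\<Sum>j\<in>J'. A' l j * x' j) = (\<Sum>j\<in>J'. A l j * x' j) - A l p / A e p * s"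
        unfolding A'_def s_def by (simp add: algebra_simps sum_subtractf sum_distrib_left sum_divide_distrib)
      then show ?thesis using sumx[of "A l"] x'(3) l by (simp add: field_simps)
    qed
    moreover have "\<forall>j\<in>J. x j \<in> F"
      unfolding x_def s_def using x'(1) Suc.prems p assms(1) unfolding J'_def
      by (auto intro!: sf_divide sf_uminus sf_sum sf_mult)
    moreover have "\<exists>j\<in>J. x j \<noteq> 0" using x'(2) unfolding x_def J'_def by auto
    ultimately show ?thesis by blast
  qed
qed

lemma dual:
  fixes F L :: "'a::field_char_0 set"
  assumes fe: "finite_ext F L" and i: "i < length (SOME bs. is_basis F L bs)"
  shows "\<exists>\<xi>\<in>L. \<forall>w\<in>L. coords F (SOME bs. is_basis F L bs) w i = field_trace F L (\<xi> * w)"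
proof -
  interpret basis_ctx F L "SOME bs. is_basis F L bs" using fe_basis[OF fe] .
  define bs where "bs = (SOME bs. is_basis F L bs)"
  define d where "d = length bs"
  have bsL: "\<And>j. j < d \<Longrightarrow> bs ! j \<in> L" using bs_in unfolding bs_def d_def by auto
  have Lmul: "\<And>u v. u \<in> L \<Longrightarrow> v \<in> L \<Longrightarrow> u * v \<in> L" using L sf_mult by blast
  have FL': "\<And>u. u \<in> F \<Longrightarrow> u \<in> L" using FL by blast
  define A where "A l j = (if j < d then field_trace F L (bs ! j * bs ! l) else coords F bs (bs ! l) i)" for l j
  have AF: "\<forall>l<d. \<forall>j\<in>{..d}. A l j \<in> F"
    unfolding A_def using bsL Lmul ft_in[OF fe] coords_in[unfolded bs_def[symmetric]] by auto
  obtain x where xF: "\<forall>j\<in>{..d}. x j \<in> F" and xnz: "\<exists>j\<in>{..d}. x j \<noteq> 0"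
    and xeq: "\<forall>l<d. (\<Sum>j\<in>{..d}. A l j * x j) = 0"
    using homog[OF F, of "{..d}" d A] AF by auto
  define z where "z = (\<Sum>j<d. x j * bs ! j)"
  have zL: "z \<in> L" unfolding z_def using xF bsL FL' Lmul by (intro sf_sum[OF L]) auto
  have E: "field_trace F L (z * bs ! l) + x d * coords F bs (bs ! l) i = 0" if l: "l < d" for l
  proof -
    have "z * bs ! l = (\<Sum>j<d. x j * (bs ! j * bs ! l))"
      unfolding z_def by (simp add: sum_distrib_right mult.assoc)
    then have "field_trace F L (z * bs ! l) = (\<Sum>j<d. x j * field_trace F L (bs ! j * bs ! l))"
      using ft_sum[OF fe, of "{..<d}" x "\<lambda>j. bs ! j * bs ! l"] xF bsL Lmul l by auto
    moreover have "(\<Sum>j\<in>{..d}. A l j * x j) = (\<Sum>j<d. x j * field_trace F L (bs ! j * bs ! l)) + x d * coords F bs (bs ! l) i"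
      unfolding A_def lessThan_Suc_atMost[symmetric] by (simp add: mult.commute)
    ultimately show ?thesis using xeq l by simp
  qed
  have W: "field_trace F L (z * w) + x d * coords F bs w i = 0" if w: "w \<in> L" for w
  proof -
    define c where "c = coords F bs w"
    have cF: "\<And>l. c l \<in> F" unfolding c_def bs_def using coords_in w by blast
    have "lc bs c = w" unfolding c_def bs_def using coords_lc[OF w] by (rule sym)
    then have wsum: "w = (\<Sum>l<d. c l * bs ! l)" unfolding lc_def d_def by simp
    have "z * w = (\<Sum>l<d. c l * (z * bs ! l))"
      by (subst wsum) (simp add: sum_distrib_left mult.assoc mult.left_commute)
    then have "field_trace F L (z * w) = (\<Sum>l<d. c l * field_trace F L (z * bs ! l))"
      using ft_sum[OF fe, of "{..<d}" c "\<lambda>l. z * bs ! l"] cF bsL Lmul zL by auto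
    also have "\<dots> = (\<Sum>l<d. c l * (- x d * coords F bs (bs ! l) i))"
    proof (intro sum.cong refl)
      fix l assume "l \<in> {..<d}"
      then have "field_trace F L (z * bs ! l) = - (x d * coords F bs (bs ! l) i)"
        using E by (simp add: eq_neg_iff_add_eq_0)
      then show "c l * field_trace F L (z * bs ! l) = c l * (- x d * coords F bs (bs ! l) i)" by simp
    qed
    also have "\<dots> = (\<Sum>l<d. if l = i then - x d * c l else 0)"
    proof (intro sum.cong refl)
      fix l assume "l \<in> {..<d}"
      then have "coords F bs (bs ! l) i = (if i = l then 1 else 0)"
        using coords_bs[of l i] i unfolding bs_def d_def by simp
      then show "c l * (- x d * coords F bs (bs ! l) i) = (if l = i then - x d * c l else 0)" by auto
    qed
    also have "\<dots> = - x d * c i" using i unfolding bs_def[symmetric] d_def by simp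
    finally show ?thesis unfolding c_def by simp
  qed
  show ?thesis
  proof (cases "x d = 0")
    case True
    have "z = 0"
    proof (rule ccontr)
      assume "z \<noteq> 0"
      then have "inverse z \<in> L" using zL sf_inverse[OF L] by blast
      then have "field_trace F L (z * inverse z) = 0" using W[of "inverse z"] True by simp
      then show False using \<open>z \<noteq> 0\<close> ft_one_nz[OF fe] by simp
    qed
    have lc0: "lc bs x = 0" using \<open>z = 0\<close> unfolding lc_def z_def d_def .
    have xF': "\<forall>j<length bs. x j \<in> F" using xF unfolding d_def by auto
    have x0: "x j = 0" if "j < d" for j
      using indep[of x j, folded bs_def, OF xF' lc0] that unfolding d_def .
    from xnz obtain j where j: "j \<le> d" "x j \<noteq> 0" by auto
    show ?thesis
    proof (cases "j = d")
      case True then show ?thesis using j \<open>x d = 0\<close> by simp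
    next
      case False then show ?thesis using j x0 by simp
    qed
  next
    case False
    define \<xi> where "\<xi> = - z / x d"
    have xdF: "x d \<in> F" using xF by auto
    have "z / x d \<in> L" by (rule sf_divide[OF L zL FL'[OF xdF]])
    then have "\<xi> \<in> L" unfolding \<xi>_def using sf_uminus[OF L] by (simp add: minus_divide_left[symmetric])
    moreover have "coords F bs w i = field_trace F L (\<xi> * w)" if w: "w \<in> L" for w
    proof -
      have "- inverse (x d) \<in> F" using xdF sf_uminus[OF F] sf_inverse[OF F] by blast
      then have "field_trace F L (- inverse (x d) * (z * w)) = - inverse (x d) * field_trace F L (z * w)"
        by (rule ft_scale[OF fe _ Lmul[OF zL w]])
      moreover have "\<xi> * w = - inverse (x d) * (z * w)" unfolding \<xi>_def by (simp add: divide_inverse ac_simps)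
      ultimately have h1: "field_trace F L (\<xi> * w) = - inverse (x d) * field_trace F L (z * w)" by simp
      have h2: "field_trace F L (z * w) = - (x d * coords F bs w i)"
        using W[OF w] by (simp add: eq_neg_iff_add_eq_0)
      show ?thesis unfolding h1 h2 using False by simp
    qed
    ultimately show ?thesis unfolding bs_def by blast
  qed
qed

locale av_ctx =
  fixes F :: "'a::field set" and a :: "'a \<Rightarrow> real"
  assumes F: "is_subfield F" and AV: "nonarch_absval F a"
begin

lemma nonneg: "x \<in> F \<Longrightarrow> a x \<ge> 0" using AV by (simp add: nonarch_absval_def)
lemma zero_iff: "x \<in> F \<Longrightarrow> a x = 0 \<longleftrightarrow> x = 0" using AV by (simp add: nonarch_absval_def)
lemma a0: "a 0 = 0" using zero_iff sf_0[OF F] by blast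
lemma mult: "x \<in> F \<Longrightarrow> y \<in> F \<Longrightarrow> a (x * y) = a x * a y" using AV by (simp add: nonarch_absval_def)
lemma ultra: "x \<in> F \<Longrightarrow> y \<in> F \<Longrightarrow> a (x + y) \<le> max (a x) (a y)" using AV by (simp add: nonarch_absval_def)
lemma one: "a 1 = 1"
proof -
  have "a 1 = a 1 * a 1" using mult[of 1 1] sf_1[OF F] by simp
  moreover have "a 1 \<noteq> 0" using zero_iff[of 1] sf_1[OF F] by simp
  ultimately show ?thesis by (metis mult_cancel_right1)
qed
lemma neg: "x \<in> F \<Longrightarrow> a (- x) = a x"
proof -
  assume x: "x \<in> F"
  have m1: "-1 \<in> F" using sf_uminus[OF F sf_1[OF F]] .
  have h1: "a (-1) * a (-1) = 1" using mult[OF m1 m1] one by simp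
  have h2: "a (-1) \<ge> 0" using nonneg[OF m1] .
  have "sqrt (a (-1) * a (-1)) = a (-1)" using real_sqrt_mult_self[of "a (-1)"] h2 by simp
  moreover have "sqrt (a (-1) * a (-1)) = 1" using h1 by simp
  ultimately have "a (-1) = 1" by simp
  then show ?thesis using mult[OF m1 x] by simp
qed
lemma sym: "x \<in> F \<Longrightarrow> y \<in> F \<Longrightarrow> a (x - y) = a (y - x)"
  using neg[of "x - y"] sf_diff[OF F] by simp
lemma ultra_diff: "x \<in> F \<Longrightarrow> y \<in> F \<Longrightarrow> z \<in> F \<Longrightarrow> a (x - z) \<le> max (a (x - y)) (a (y - z))"
  using ultra[of "x - y" "y - z"] sf_diff[OF F] by simp
lemma ultra_sub: "x \<in> F \<Longrightarrow> y \<in> F \<Longrightarrow> a (x - y) \<le> max (a x) (a y)"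
  using ultra[of x "- y"] neg[of y] sf_uminus[OF F] by simp
lemma tri: "x \<in> F \<Longrightarrow> y \<in> F \<Longrightarrow> a (x + y) \<le> a x + a y"
  using ultra[of x y] nonneg[of x] nonneg[of y] by simp
lemma sum_le: "finite S \<Longrightarrow> (\<And>i. i \<in> S \<Longrightarrow> f i \<in> F) \<Longrightarrow> a (sum f S) \<le> (\<Sum>i\<in>S. a (f i))"
proof (induction S rule: finite_induct)
  case empty then show ?case using a0 by simp
next
  case (insert j S)
  have "a (f j + sum f S) \<le> a (f j) + a (sum f S)"
    using insert.prems by (intro tri) (auto intro!: sf_sum[OF F])
  then show ?case using insert by simp
qed
lemma inv: "x \<in> F \<Longrightarrow> a (inverse x) = inverse (a x)"
proof (cases "x = 0")
  case True then show ?thesis using a0 by simp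
next
  case False
  assume x: "x \<in> F"
  have "a (x * inverse x) = 1" using False one by simp
  then have "a x * a (inverse x) = 1" using mult[OF x sf_inverse[OF F x]] by simp
  then show ?thesis by (simp add: inverse_unique)
qed

end

locale ne_ctx =
  fixes F L :: "'a::field set" and a a0 :: "'a \<Rightarrow> real" and s :: real
  assumes F: "is_subfield F" and L: "is_subfield L" and FL: "F \<subseteq> L"
    and aL: "nonarch_absval L a" and a0F: "nonarch_absval F a0"
    and comp: "complete_absval F a0" and s: "s > 0"
    and rel: "\<forall>x\<in>F. a x = a0 x powr s"
begin

sublocale A: av_ctx L a using L aL by (simp add: av_ctx_def)
sublocale A0: av_ctx F a0 using F a0F by (simp add: av_ctx_def)

lemma complete_a:
  assumes u: "\<forall>n. u n \<in> F" and cauchy: "\<forall>e>0. \<exists>N. \<forall>m\<ge>N. \<forall>n\<ge>N. a (u m - u n) < e"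
  shows "\<exists>l\<in>F. (\<lambda>n. a (u n - l)) \<longlonglongrightarrow> 0"
proof -
  have "\<forall>e>0. \<exists>N::nat. \<forall>m\<ge>N. \<forall>n\<ge>N. a0 (u m - u n) < e"
  proof (intro allI impI)
    fix e :: real assume e: "e > 0"
    have "e powr s > 0" using e by simp
    then obtain N where N: "\<forall>m\<ge>N. \<forall>n\<ge>N. a (u m - u n) < e powr s" using cauchy by blast
    show "\<exists>N. \<forall>m\<ge>N. \<forall>n\<ge>N. a0 (u m - u n) < e"
    proof (intro exI allI impI)
      fix m n assume mn: "N \<le> m" "N \<le> n"
      have d: "u m - u n \<in> F" using u sf_diff[OF F] by blast
      show "a0 (u m - u n) < e"
      proof (rule ccontr)
        assume "\<not> a0 (u m - u n) < e"
        then have "e powr s \<le> a0 (u m - u n) powr s" using e s by (intro powr_mono2) auto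
        moreover have "a (u m - u n) < e powr s" using N mn by blast
        moreover have "a (u m - u n) = a0 (u m - u n) powr s" using rel d by blast
        ultimately show False by linarith
      qed
    qed
  qed
  then obtain l where l: "l \<in> F" "\<forall>e>0. \<exists>N::nat. \<forall>n\<ge>N. a0 (u n - l) < e"
    using comp u unfolding complete_absval_def by blast
  have "(\<lambda>n. a (u n - l)) \<longlonglongrightarrow> 0"
    unfolding lim_sequentially dist_real_def
  proof (intro allI impI)
    fix e :: real assume e: "e > 0"
    have "e powr (1 / s) > 0" using e by simp
    then obtain N where N: "\<forall>n\<ge>N. a0 (u n - l) < e powr (1 / s)" using l(2) by blast
    show "\<exists>N. \<forall>n\<ge>N. \<bar>a (u n - l) - 0\<bar> < e"
    proof (intro exI allI impI)
      fix n assume n: "N \<le> n"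
      have d: "u n - l \<in> F" using u l sf_diff[OF F] by blast
      have "a0 (u n - l) powr s < (e powr (1/s)) powr s"
        using N n A0.nonneg[OF d] s by (intro powr_less_mono2) auto
      also have "\<dots> = e" using e s by (simp add: powr_powr)
      finally show "\<bar>a (u n - l) - 0\<bar> < e" using rel d A.nonneg[of "u n - l"] FL by auto
    qed
  qed
  then show ?thesis using l by blast
qed

end

lemma lc_append: "lc (bs @ [b]) c = lc bs c + c (length bs) * b"
  unfolding lc_def by (simp add: nth_append)

lemma lc_diff: "lc bs (\<lambda>i. c i - d i) = lc bs c - lc bs d"
  unfolding lc_def by (simp add: algebra_simps sum_subtractf)

lemma indep_prefix:
  assumes "is_subfield F" "lin_indep F (bs @ [b])" shows "lin_indep F bs"
  unfolding lin_indep_def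
proof (intro allI impI)
  fix c i assume c: "\<forall>i<length bs. c i \<in> F" and s: "(\<Sum>i<length bs. c i * bs ! i) = 0" and i: "i < length bs"
  define c' where "c' j = (if j < length bs then c j else 0)" for j
  have "\<forall>j<length (bs @ [b]). c' j \<in> F" using c sf_0[OF assms(1)] unfolding c'_def by auto
  moreover have "lc (bs @ [b]) c' = 0"
    unfolding lc_append using s unfolding c'_def lc_def by simp
  ultimately have "\<forall>j<length (bs @ [b]). c' j = 0" using assms(2) unfolding lin_indep_def lc_def by blast
  then have "c' i = 0" using i by simp
  then show "c i = 0" using i unfolding c'_def by simp
qed

lemma indep_last:
  assumes "is_subfield F" "lin_indep F (bs @ [b])" "\<forall>i<length bs. g i \<in> F"
  shows "b \<noteq> lc bs g"
proof
  assume b: "b = lc bs g"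
  define c' where "c' j = (if j < length bs then g j else - 1)" for j
  have "\<forall>j<length (bs @ [b]). c' j \<in> F" using assms(3) sf_uminus[OF assms(1) sf_1[OF assms(1)]] unfolding c'_def by auto
  moreover have "lc bs c' = lc bs g" unfolding c'_def by (rule lc_cong) simp
  then have "lc (bs @ [b]) c' = 0"
    unfolding lc_append using b unfolding c'_def by simp
  ultimately have "\<forall>j<length (bs @ [b]). c' j = 0" using assms(2) unfolding lin_indep_def lc_def by blast
  then show False unfolding c'_def by auto
qed

context ne_ctx
begin

lemma FinL: "x \<in> F \<Longrightarrow> x \<in> L" using FL by blast

lemma norm_equiv:
  "set bs \<subseteq> L \<Longrightarrow> lin_indep F bs \<Longrightarrow>
    \<exists>C>0. \<forall>c. (\<forall>i<length bs. c i \<in> F) \<longrightarrow> (\<forall>i<length bs. a (c i) \<le> C * a (lc bs c))"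
proof (induction bs rule: rev_induct)
  case Nil
  then show ?case by (intro exI[of _ 1]) auto
next
  case (snoc b bs)
  define d where "d = length bs"
  have bsL: "set bs \<subseteq> L" and bL: "b \<in> L" using snoc.prems by auto
  have ind: "lin_indep F bs" using indep_prefix[OF F snoc.prems(2)] .
  obtain C0 where C0: "C0 > 0" "\<And>c i. (\<forall>i<d. c i \<in> F) \<Longrightarrow> i < d \<Longrightarrow> a (c i) \<le> C0 * a (lc bs c)"
    using snoc.IH[OF bsL ind] unfolding d_def by blast
  have lcL: "\<And>c. (\<forall>i<d. c i \<in> F) \<Longrightarrow> lc bs c \<in> L" using lc_in[OF L FL bsL] unfolding d_def by blast
  have "\<exists>\<delta>>0. \<forall>g. (\<forall>i<d. g i \<in> F) \<longrightarrow> \<delta> \<le> a (b - lc bs g)"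
  proof (rule ccontr)
    assume "\<not> ?thesis"
    then have "\<forall>k::nat. \<exists>g. (\<forall>i<d. g i \<in> F) \<and> a (b - lc bs g) < 1 / Suc k"
      by (metis not_le of_nat_0_less_iff zero_less_Suc zero_less_divide_1_iff)
    then obtain cc where cc: "\<And>k. \<forall>i<d. cc k i \<in> F" "\<And>k. a (b - lc bs (cc k)) < 1 / Suc k"
      by metis
    define w where "w k = lc bs (cc k)" for k
    have wL: "w k \<in> L" for k unfolding w_def using lcL cc(1) by blast
    have bw: "b - w k \<in> L" for k using wL bL sf_diff[OF L] by blast
    have wdiff: "a (w m - w n) < 1 / Suc N" if "N \<le> m" "N \<le> n" for m n N
    proof -
      have "w m - w n = (b - w n) - (b - w m)" by simp
      then have "a (w m - w n) \<le> max (a (b - w n)) (a (b - w m))" using A.ultra_sub[OF bw bw] by simp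
      moreover have "1 / real (Suc m) \<le> 1 / Suc N" "1 / real (Suc n) \<le> 1 / Suc N"
        using that by (auto simp: frac_le)
      ultimately show ?thesis using cc(2)[of m] cc(2)[of n] unfolding w_def by linarith
    qed
    have "\<forall>i. \<exists>g. i < d \<longrightarrow> g \<in> F \<and> (\<lambda>k. a (cc k i - g)) \<longlonglongrightarrow> 0"
    proof (intro allI impI)
      fix i
      show "\<exists>g. i < d \<longrightarrow> g \<in> F \<and> (\<lambda>k. a (cc k i - g)) \<longlonglongrightarrow> 0"
      proof (cases "i < d")
        case False then show ?thesis by simp
      next
        case True
        have "\<forall>e>0. \<exists>N. \<forall>m\<ge>N. \<forall>n\<ge>N. a (cc m i - cc n i) < e"
        proof (intro allI impI)
          fix e :: real assume e: "e > 0"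
          obtain N :: nat where N: "C0 / e < real N" using reals_Archimedean2 by blast
          have N': "C0 / Suc N < e" using N e C0(1) by (simp add: field_simps) 
          show "\<exists>N. \<forall>m\<ge>N. \<forall>n\<ge>N. a (cc m i - cc n i) < e"
          proof (intro exI allI impI)
            fix m n assume mn: "N \<le> m" "N \<le> n"
            have "\<forall>j<d. cc m j - cc n j \<in> F" using cc(1) sf_diff[OF F] by blast
            then have "a (cc m i - cc n i) \<le> C0 * a (lc bs (\<lambda>j. cc m j - cc n j))"
              using C0(2)[of "\<lambda>j. cc m j - cc n j" i] True by blast
            also have "\<dots> = C0 * a (w m - w n)" unfolding w_def lc_diff by simp
            also have "\<dots> \<le> C0 * (1 / Suc N)" using wdiff[OF mn] C0(1) by (intro mult_left_mono) auto
            finally show "a (cc m i - cc n i) < e" using N' by simp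
          qed
        qed
        then show ?thesis using complete_a[of "\<lambda>k. cc k i"] cc(1) True by auto
      qed
    qed
    then obtain g where g: "\<And>i. i < d \<Longrightarrow> g i \<in> F" "\<And>i. i < d \<Longrightarrow> (\<lambda>k. a (cc k i - g i)) \<longlonglongrightarrow> 0"
      by metis
    define w0 where "w0 = lc bs g"
    have w0L: "w0 \<in> L" unfolding w0_def using lcL g(1) by blast
    have bound: "a (w k - w0) \<le> (\<Sum>i<d. a (cc k i - g i) * a (bs ! i))" for k
    proof -
      have "w k - w0 = (\<Sum>i<d. (cc k i - g i) * bs ! i)"
        unfolding w_def w0_def lc_def d_def by (simp add: sum_subtractf algebra_simps)
      moreover have "\<And>i. i < d \<Longrightarrow> (cc k i - g i) * bs ! i \<in> L"
        using cc(1) g(1) bsL FinL sf_diff[OF F] sf_mult[OF L] unfolding d_def by (meson nth_mem subsetD)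
      ultimately have "a (w k - w0) \<le> (\<Sum>i<d. a ((cc k i - g i) * bs ! i))"
        using A.sum_le[of "{..<d}"] by simp
      also have "\<dots> = (\<Sum>i<d. a (cc k i - g i) * a (bs ! i))"
      proof (intro sum.cong refl)
        fix i assume "i \<in> {..<d}"
        then have "cc k i - g i \<in> L" "bs ! i \<in> L"
          using cc(1) g(1) bsL FinL sf_diff[OF F] unfolding d_def by auto
        then show "a ((cc k i - g i) * bs ! i) = a (cc k i - g i) * a (bs ! i)" by (rule A.mult)
      qed
      finally show ?thesis .
    qed
    have lim1: "(\<lambda>k. \<Sum>i<d. a (cc k i - g i) * a (bs ! i)) \<longlonglongrightarrow> 0"
    proof (rule tendsto_null_sum)
      fix i assume "i \<in> {..<d}"
      then show "(\<lambda>k. a (cc k i - g i) * a (bs ! i)) \<longlonglongrightarrow> 0"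
        using g(2)[of i] by (intro tendsto_mult_left_zero) simp
    qed
    have lim2: "(\<lambda>k. a (w k - w0)) \<longlonglongrightarrow> 0"
    proof (rule Lim_null_comparison[OF _ lim1])
      show "\<forall>\<^sub>F k in sequentially. norm (a (w k - w0)) \<le> (\<Sum>i<d. a (cc k i - g i) * a (bs ! i))"
        using bound A.nonneg[of "w _ - w0"] wL w0L sf_diff[OF L] by (intro always_eventually) auto
    qed
    have lim3: "(\<lambda>k. a (b - w k)) \<longlonglongrightarrow> 0"
    proof (rule Lim_null_comparison[OF _ LIMSEQ_inverse_real_of_nat])
      show "\<forall>\<^sub>F k in sequentially. norm (a (b - w k)) \<le> inverse (real (Suc k))"
        using cc(2) A.nonneg[OF bw] unfolding w_def
        by (intro always_eventually allI) (simp add: divide_inverse less_imp_le)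
    qed
    have lim4: "(\<lambda>k. a (b - w k) + a (w k - w0)) \<longlonglongrightarrow> 0 + 0" by (rule tendsto_add[OF lim3 lim2])
    have trib: "a (b - w0) \<le> a (b - w k) + a (w k - w0)" for k
    proof -
      have "b - w0 = (b - w k) + (w k - w0)" by simp
      then show ?thesis using A.tri[OF bw, of "w k - w0"] wL w0L sf_diff[OF L] by metis
    qed
    have "(\<lambda>k. a (b - w0)) \<longlonglongrightarrow> a (b - w0)" by simp
    from LIMSEQ_le[OF this lim4] trib have "a (b - w0) \<le> 0" by simp
    then have "a (b - w0) = 0" using A.nonneg[of "b - w0"] bL w0L sf_diff[OF L] by force
    then have "b = w0" using A.zero_iff[of "b - w0"] bL w0L sf_diff[OF L] by simp
    then show False using indep_last[OF F snoc.prems(2), of g] g(1) unfolding w0_def d_def by blast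
  qed
  then obtain \<delta> where \<delta>: "\<delta> > 0" "\<And>g. \<forall>i<d. g i \<in> F \<Longrightarrow> \<delta> \<le> a (b - lc bs g)" by blast
  define C where "C = max (1 / \<delta>) (C0 * (1 + a b / \<delta>))"
  have ab: "a b \<ge> 0" using A.nonneg[OF bL] .
  have C0C: "C0 \<le> C" unfolding C_def using C0(1) ab \<delta>(1)
    by (simp add: max.coboundedI2 mult_le_cancel_left1)
  have Cpos: "C > 0" unfolding C_def using \<delta>(1) by (simp add: less_max_iff_disj)
  show ?case
  proof (intro exI[of _ C] conjI allI impI Cpos)
    fix c i assume c: "\<forall>i<length (bs @ [b]). c i \<in> F" and i: "i < length (bs @ [b])"
    have cF: "\<forall>i<d. c i \<in> F" using c unfolding d_def by auto
    have cd: "c d \<in> F" using c unfolding d_def by auto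
    define x where "x = lc (bs @ [b]) c"
    have x: "x = lc bs c + c d * b" unfolding x_def lc_append d_def ..
    have lcbsL: "lc bs c \<in> L" using lcL[OF cF] .
    have xL: "x \<in> L" unfolding x using lcbsL cd FinL bL sf_add[OF L] sf_mult[OF L] by blast
    have ax: "a x \<ge> 0" using A.nonneg[OF xL] .
    have main: "a (c d) \<le> a x / \<delta> \<and> a (lc bs c) \<le> a x * (1 + a b / \<delta>)"
    proof (cases "c d = 0")
      case True
      have u: "0 \<le> a b / \<delta>" using ab \<delta>(1) by simp
      have "a x \<le> a x * (1 + a b / \<delta>)" using mult_left_mono[of 1 "1 + a b / \<delta>" "a x"] u ax by simp
      moreover have "lc bs c = x" using x True by simp
      ultimately show ?thesis using True ax \<delta>(1) A.a0 by (simp add: divide_nonneg_pos)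
    next
      case False
      define g where "g j = - c j / c d" for j
      have gF: "\<forall>j<d. g j \<in> F" unfolding g_def using cF cd sf_divide[OF F] sf_uminus[OF F] by auto
      have "lc bs g = - lc bs c / c d" unfolding g_def lc_def by (simp add: sum_divide_distrib sum_negf)
      then have "x = c d * (b - lc bs g)" unfolding x using False by (simp add: field_simps)
      then have "a x = a (c d) * a (b - lc bs g)"
        using A.mult[of "c d" "b - lc bs g"] cd FinL bL lcL[OF gF] sf_diff[OF L] by simp
      moreover have "a (c d) \<ge> 0" using A.nonneg[OF FinL[OF cd]] .
      ultimately have "a (c d) * \<delta> \<le> a x" using \<delta>(2)[OF gF] by (simp add: mult_left_mono)
      then have acd: "a (c d) \<le> a x / \<delta>" using \<delta>(1) by (simp add: field_simps)
      have "lc bs c = x - c d * b" unfolding x by simp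
      then have "a (lc bs c) \<le> max (a x) (a (c d * b))"
        using A.ultra_sub[of x "c d * b"] xL cd FinL bL sf_mult[OF L] by simp
      also have "\<dots> \<le> max (a x) (a x / \<delta> * a b)"
      proof -
        have "a (c d * b) = a (c d) * a b" using A.mult[of "c d" b] cd FinL bL by simp
        also have "\<dots> \<le> a x / \<delta> * a b" using acd ab by (rule mult_right_mono)
        finally show ?thesis by simp
      qed
      also have "\<dots> \<le> a x * (1 + a b / \<delta>)"
        using ax ab \<delta>(1) by (simp add: field_simps)
      finally show ?thesis using acd by simp
    qed
    show "a (c i) \<le> C * a (lc (bs @ [b]) c)"
    proof (cases "i = d")
      case True
      have "1 / \<delta> \<le> C" unfolding C_def by simp
      then have "(1 / \<delta>) * a x \<le> C * a x" using ax by (rule mult_right_mono)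
      then have "a x / \<delta> \<le> C * a x" by simp
      then show ?thesis using main True unfolding x_def by simp
    next
      case False
      then have id: "i < d" using i unfolding d_def by simp
      have "a (c i) \<le> C0 * a (lc bs c)" using C0(2)[OF cF id] .
      also have "\<dots> \<le> C0 * (a x * (1 + a b / \<delta>))" using main C0(1) by simp
      also have "\<dots> = (C0 * (1 + a b / \<delta>)) * a x" by simp
      also have "\<dots> \<le> C * a x" unfolding C_def using ax by (simp add: mult_right_mono)
      finally show ?thesis unfolding x_def .
    qed
  qed
qed

end

locale loc_ctx =
  fixes F :: "'a::field set" and a :: "'a \<Rightarrow> real"
  assumes NL: "normalized_local_field F a"
begin

lemma F: "is_subfield F" using NL by (simp add: normalized_local_field_def)
lemma AV: "nonarch_absval F a" using NL by (simp add: normalized_local_field_def)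

sublocale A: av_ctx F a using F AV by (simp add: av_ctx_def)

definition "Ok = {x\<in>F. a x \<le> 1}"
definition "Rel = {(x, y). x \<in> F \<and> y \<in> F \<and> a x \<le> 1 \<and> a y \<le> 1 \<and> a (x - y) < 1}"
definition "q = real (card (residue_field F a))"

lemma res_def: "residue_field F a = Ok // Rel"
  unfolding residue_field_def Ok_def Rel_def by simp

lemma res_fin: "finite (residue_field F a)" using NL by (simp add: normalized_local_field_def)

lemma val_group: "a ` (F - {0}) = {q powi i | i. True}"
  using NL unfolding normalized_local_field_def q_def by simp

lemma q_ge2: "q \<ge> 2"
proof -
  have O01: "0 \<in> Ok" "1 \<in> Ok" unfolding Ok_def using F A.a0 A.one by (auto simp: sf_0 sf_1)
  have c0: "Rel `` {0} \<in> residue_field F a" unfolding res_def using O01(1) by (rule quotientI)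
  have c1: "Rel `` {1} \<in> residue_field F a" unfolding res_def using O01(2) by (rule quotientI)
  have "1 \<in> Rel `` {1}" unfolding Rel_def using F A.one A.a0 by (auto simp: sf_1)
  moreover have "1 \<notin> Rel `` {0}" unfolding Rel_def using A.neg[OF sf_1[OF F]] A.one by auto
  ultimately have "Rel `` {0} \<noteq> Rel `` {1}" by blast
  then have "card {Rel `` {0}, Rel `` {1}} = 2" by simp
  moreover have "card {Rel `` {0}, Rel `` {1}} \<le> card (residue_field F a)"
    using c0 c1 res_fin by (intro card_mono) auto
  ultimately show ?thesis unfolding q_def by simp
qed

lemma reps: "\<exists>R0. finite R0 \<and> R0 \<subseteq> Ok \<and> (\<forall>u\<in>Ok. \<exists>r\<in>R0. a (u - r) < 1)"
proof -
  define rep where "rep C = (SOME x. x \<in> Ok \<and> C = Rel `` {x})" for C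
  have rep: "rep C \<in> Ok \<and> C = Rel `` {rep C}" if C: "C \<in> residue_field F a" for C
  proof -
    obtain x where "x \<in> Ok" "C = Rel `` {x}" using C unfolding res_def quotient_def by blast
    then show ?thesis unfolding rep_def by (rule someI[of _ x, OF conjI])
  qed
  define R0 where "R0 = rep ` residue_field F a"
  have "finite R0" unfolding R0_def using res_fin by simp
  moreover have "R0 \<subseteq> Ok" unfolding R0_def using rep by auto
  moreover have "\<exists>r\<in>R0. a (u - r) < 1" if u: "u \<in> Ok" for u
  proof -
    let ?C = "Rel `` {u}"
    have C: "?C \<in> residue_field F a" unfolding res_def using u by (rule quotientI)
    have "u \<in> ?C" using u A.a0 unfolding Rel_def Ok_def by auto
    then have "u \<in> Rel `` {rep ?C}" using rep[OF C] by simp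
    then have "a (rep ?C - u) < 1" unfolding Rel_def by auto
    moreover have "rep ?C \<in> F" "u \<in> F" using rep[OF C] u unfolding Ok_def by auto
    ultimately have "a (u - rep ?C) < 1" using A.sym by simp
    then show ?thesis unfolding R0_def using C by blast
  qed
  ultimately show ?thesis by blast
qed

lemma discrete: assumes x: "x \<in> F" "a x < 1" shows "a x \<le> 1 / q"
proof (cases "x = 0")
  case True then show ?thesis using A.a0 q_ge2 by simp
next
  case False
  then have "a x \<in> a ` (F - {0})" using x by auto
  then obtain i where i: "a x = q powi i" using val_group by auto
  have q1: "q \<ge> 1" using q_ge2 by simp
  have "i < 0"
  proof (rule ccontr)
    assume "\<not> i < 0"
    then have "1 \<le> q powi i" using q1 by simp
    then show False using i x by simp
  qed
  then have "q powi i \<le> q powi (-1)" using q1 by (intro power_int_increasing) auto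
  then show ?thesis using i by (simp add: power_int_minus inverse_eq_divide)
qed

lemma unif: "\<exists>\<pi>\<in>F. \<pi> \<noteq> 0 \<and> a \<pi> = 1 / q"
proof -
  have "q powi (-1) \<in> {q powi i | i. True}" by blast
  then have "q powi (-1) \<in> a ` (F - {0})" using val_group by simp
  moreover have "q powi (-1) = 1 / q" by (simp add: power_int_minus inverse_eq_divide)
  ultimately show ?thesis by auto
qed

lemma approx_O: "\<exists>R. finite R \<and> R \<subseteq> F \<and> (\<forall>x\<in>Ok. \<exists>r\<in>R. a (x - r) \<le> (1 / q) ^ j)"
proof (induction j)
  case 0
  show ?case using A.a0 F unfolding Ok_def by (intro exI[of _ "{0}"]) (auto simp: sf_0)
next
  case (Suc j)
  obtain R where R: "finite R" "R \<subseteq> F" "\<forall>x\<in>Ok. \<exists>r\<in>R. a (x - r) \<le> (1 / q) ^ j" using Suc.IH by blast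
  obtain R0 where R0: "finite R0" "R0 \<subseteq> Ok" "\<forall>u\<in>Ok. \<exists>r\<in>R0. a (u - r) < 1" using reps by blast
  obtain \<pi> where \<pi>: "\<pi> \<in> F" "\<pi> \<noteq> 0" "a \<pi> = 1 / q" using unif by blast
  have \<pi>j: "\<pi> ^ j \<in> F" "\<pi> ^ j \<noteq> 0" "a (\<pi> ^ j) = (1 / q) ^ j"
  proof -
    show "\<pi> ^ j \<in> F" by (induction j) (auto simp: sf_1[OF F] sf_mult[OF F] \<pi>(1))
    show "\<pi> ^ j \<noteq> 0" using \<pi>(2) by simp
    show "a (\<pi> ^ j) = (1 / q) ^ j"
    proof (induction j)
      case 0 then show ?case using A.one by simp
    next
      case (Suc j)
      have "\<pi> ^ j \<in> F" by (induction j) (auto simp: sf_1[OF F] sf_mult[OF F] \<pi>(1))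
      then show ?case using Suc A.mult[OF \<pi>(1)] \<pi>(3) by simp
    qed
  qed
  have qpos: "q > 0" using q_ge2 by simp
  define R' where "R' = (\<lambda>(r, r0). r + \<pi> ^ j * r0) ` (R \<times> R0)"
  have "finite R'" unfolding R'_def using R(1) R0(1) by simp
  moreover have "R' \<subseteq> F" unfolding R'_def using R(2) R0(2) \<pi>j(1) unfolding Ok_def
    by (auto intro!: sf_add[OF F] sf_mult[OF F])
  moreover have "\<exists>r'\<in>R'. a (x - r') \<le> (1 / q) ^ Suc j" if x: "x \<in> Ok" for x
  proof -
    obtain r where r: "r \<in> R" "a (x - r) \<le> (1 / q) ^ j" using R(3) x by blast
    have xr: "x - r \<in> F" using x r R(2) sf_diff[OF F] unfolding Ok_def by blast
    define u where "u = (x - r) / \<pi> ^ j"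
    have uF: "u \<in> F" unfolding u_def using xr \<pi>j sf_divide[OF F] by blast
    have xu: "x - r = \<pi> ^ j * u" unfolding u_def using \<pi>j(2) by simp
    have "a (x - r) = (1 / q) ^ j * a u" using xu A.mult[OF \<pi>j(1) uF] \<pi>j(3) by simp
    then have "(1 / q) ^ j * a u \<le> (1 / q) ^ j * 1" using r(2) by simp
    then have "a u \<le> 1" using qpos by (simp add: mult_le_cancel_left_pos)
    then have "u \<in> Ok" using uF unfolding Ok_def by simp
    then obtain r0 where r0: "r0 \<in> R0" "a (u - r0) < 1" using R0(3) by blast
    have r0F: "r0 \<in> F" using r0 R0(2) unfolding Ok_def by blast
    have ur0: "u - r0 \<in> F" using uF r0F sf_diff[OF F] by blast
    have "x - (r + \<pi> ^ j * r0) = \<pi> ^ j * (u - r0)" using xu by (simp add: algebra_simps)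
    then have "a (x - (r + \<pi> ^ j * r0)) = (1 / q) ^ j * a (u - r0)"
      using A.mult[OF \<pi>j(1) ur0] \<pi>j(3) by simp
    also have "\<dots> \<le> (1 / q) ^ j * (1 / q)"
      using discrete[OF ur0 r0(2)] qpos by (intro mult_left_mono) auto
    finally have "a (x - (r + \<pi> ^ j * r0)) \<le> (1 / q) ^ Suc j" by (simp add: mult.commute)
    moreover have "r + \<pi> ^ j * r0 \<in> R'" unfolding R'_def using r(1) r0(1) by force
    ultimately show ?thesis by blast
  qed
  ultimately show ?case by blast
qed

lemma separable: "\<exists>D. countable D \<and> D \<subseteq> F \<and> (\<forall>x\<in>F. \<forall>e>0. \<exists>y\<in>D. a (x - y) < e)"
proof -
  obtain R where R: "\<And>j. finite (R j)" "\<And>j. R j \<subseteq> F" "\<And>j. \<forall>x\<in>Ok. \<exists>r\<in>R j. a (x - r) \<le> (1 / q) ^ j"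
    using approx_O by metis
  obtain \<pi> where \<pi>: "\<pi> \<in> F" "\<pi> \<noteq> 0" "a \<pi> = 1 / q" using unif by blast
  have \<pi>F: "\<pi> ^ i \<in> F" for i by (induction i) (auto simp: sf_1[OF F] sf_mult[OF F] \<pi>(1))
  have a\<pi>: "a (\<pi> ^ i) = (1 / q) ^ i" for i
  proof (induction i)
    case 0 then show ?case using A.one by simp
  next
    case (Suc j) then show ?case using A.mult[OF \<pi>(1) \<pi>F[of j]] \<pi>(3) by simp
  qed
  have qpos: "q > 0" "q > 1" using q_ge2 by simp_all
  define D where "D = (\<Union>(i, j)\<in>(UNIV :: (nat \<times> nat) set). (\<lambda>r. r / \<pi> ^ i) ` R (i + j))"
  have "countable D" unfolding D_def using R(1) by (intro countable_UN) (auto intro: countable_finite)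
  moreover have "D \<subseteq> F" unfolding D_def using R(2) \<pi>F \<pi>(2) sf_divide[OF F] by blast
  moreover have "\<exists>y\<in>D. a (x - y) < e" if x: "x \<in> F" and e: "e > 0" for x e
  proof -
    obtain i where i: "a x < q ^ i" using real_arch_pow[OF qpos(2)] by blast
    obtain j where j: "(1 / q) ^ j < e" using real_arch_pow_inv[OF e, of "1 / q"] qpos by auto
    define y where "y = x * \<pi> ^ i"
    have yF: "y \<in> F" unfolding y_def using x \<pi>F sf_mult[OF F] by blast
    have ay: "a y = a x * (1 / q) ^ i" unfolding y_def using A.mult[OF x \<pi>F] a\<pi> by simp
    also have "\<dots> \<le> q ^ i * (1 / q) ^ i" using i qpos by (intro mult_right_mono) auto
    also have "\<dots> = 1" using qpos by (simp add: power_one_over)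
    finally have "y \<in> Ok" using yF unfolding Ok_def by simp
    then obtain r where r: "r \<in> R (i + j)" "a (y - r) \<le> (1 / q) ^ (i + j)" using R(3) by blast
    have rF: "r \<in> F" using r R(2) by blast
    have "x - r / \<pi> ^ i = (y - r) * inverse (\<pi> ^ i)" unfolding y_def using \<pi>(2)
      by (simp add: field_simps)
    then have "a (x - r / \<pi> ^ i) = a (y - r) * inverse ((1 / q) ^ i)"
      using A.mult[of "y - r" "inverse (\<pi> ^ i)"] A.inv[OF \<pi>F] a\<pi> yF rF \<pi>F
        sf_diff[OF F] sf_inverse[OF F] by simp
    also have "\<dots> \<le> (1 / q) ^ (i + j) * inverse ((1 / q) ^ i)"
      using r(2) qpos by (intro mult_right_mono) auto
    also have "\<dots> = (1 / q) ^ j" using qpos by (simp add: power_add)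
    finally have "a (x - r / \<pi> ^ i) < e" using j by simp
    moreover have "r / \<pi> ^ i \<in> D" unfolding D_def using r(1) by blast
    ultimately show ?thesis by blast
  qed
  ultimately show ?thesis by blast
qed

end

lemma ft_self:
  fixes L :: "'a::field set"
  assumes L: "is_subfield L" and x: "x \<in> L"
  shows "field_trace L L x = x"
proof -
  have "is_basis L L [1]"
    unfolding is_basis_def lin_indep_def lin_span_def using L
    by (auto simp: sf_1)
  then have fe: "finite_ext L L" using L unfolding finite_ext_def by blast
  interpret basis_ctx L L "SOME bs. is_basis L L bs" using fe_basis[OF fe] .
  define bs where "bs = (SOME bs. is_basis L L bs)"
  have ne: "bs \<noteq> []" using bs_nonempty unfolding bs_def .
  have b0L: "bs ! 0 \<in> L" using bs_in ne unfolding bs_def by (auto simp: subset_iff)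
  have single: "lc bs (\<lambda>i. if i = 0 then t else 0) = t * bs ! 0" for t
  proof -
    have "(\<Sum>i<length bs. (if i = 0 then t else 0) * bs ! i) = (\<Sum>i<length bs. if i = 0 then t * bs ! 0 else 0)"
      by (rule sum.cong) auto
    then show ?thesis unfolding lc_def using ne by simp
  qed
  have cb: "coords L bs (bs ! j) i = (if i = j then 1 else 0)" if "j < length bs" "i < length bs" for i j
    using coords_bs[of j i] that unfolding bs_def by simp
  have b0: "bs ! 0 \<noteq> 0"
  proof
    assume "bs ! 0 = 0"
    then have "bs ! 0 = lc bs (\<lambda>i. if i = 0 then 0 else 0)" using single[of 0] by simp
    then have "coords L bs (bs ! 0) 0 = 0"
      using coords_unique[of "\<lambda>i. if i = 0 then 0 else 0" "bs ! 0" 0, folded bs_def] ne L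
      by (simp add: sf_0)
    then show False using cb[of 0 0] ne by simp
  qed
  have len: "length bs = 1"
  proof (rule ccontr)
    assume "length bs \<noteq> 1"
    then have l2: "1 < length bs" using ne by (cases bs) auto
    have b1L: "bs ! 1 \<in> L" using bs_in l2 unfolding bs_def by (auto simp: subset_iff)
    have "bs ! 1 = lc bs (\<lambda>i. if i = 0 then bs ! 1 / bs ! 0 else 0)" using single b0 by simp
    then have "coords L bs (bs ! 1) 1 = 0"
      using coords_unique[of "\<lambda>i. if i = 0 then bs ! 1 / bs ! 0 else 0" "bs ! 1" 1, folded bs_def] l2
        sf_divide[OF L b1L b0L] sf_0[OF L] by simp
    then show False using cb[of 1 1] l2 by simp
  qed
  have "x * bs ! 0 = lc bs (\<lambda>i. if i = 0 then x else 0)" using single by simp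
  then have "coords L bs (x * bs ! 0) 0 = x"
    using coords_unique[of "\<lambda>i. if i = 0 then x else 0" "x * bs ! 0" 0, folded bs_def] ne x sf_0[OF L] by simp
  then show ?thesis unfolding field_trace_def Let_def bs_def[symmetric] using len by simp
qed

locale main_ctx =
  fixes K :: "nat \<Rightarrow> 'a::field_char_0 set" and nabs :: "nat \<Rightarrow> 'a \<Rightarrow> real"
  assumes incr: "\<And>n. K n \<subseteq> K (Suc n)"
    and fin: "\<And>n. finite_ext (K 0) (K n)"
    and local: "\<And>n. normalized_local_field (K n) (nabs n)"
    and compat: "\<And>n. \<exists>s>0. \<forall>x\<in>K 0. nabs n x = nabs 0 x powr s"
begin

abbreviation "k \<equiv> K 0"
abbreviation "a0 \<equiv> nabs 0"

definition "bs n = (SOME bs. is_basis (K 0) (K n) bs)"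
definition "dd n = length (bs n)"
definition "phi n i y = coords (K 0) (bs n) (y n) i"
definition "sexp n = (SOME s. s > 0 \<and> (\<forall>x\<in>K 0. nabs n x = nabs 0 x powr s))"

lemma sub: "is_subfield (K n)" "K 0 \<subseteq> K n" using fe_sub[OF fin[of n]] by auto
lemma k_sub: "is_subfield k" using sub by simp

lemma mono: "m \<le> n \<Longrightarrow> K m \<subseteq> K n" using lift_Suc_mono_le[of K, OF incr] by blast

lemma basis: "basis_ctx (K 0) (K n) (bs n)" unfolding bs_def using fe_basis[OF fin] .

lemma dd_mdeg: "dd n = mdeg K n" unfolding dd_def mdeg_def ext_degree_def bs_def ..

lemma mdeg_pos: "mdeg K n > 0" unfolding mdeg_def using ext_degree_pos[OF fin] .

lemma sexp: "sexp n > 0" "\<forall>x\<in>K 0. nabs n x = nabs 0 x powr sexp n"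
  using someI_ex[OF compat[of n]] unfolding sexp_def by auto

lemma loc: "loc_ctx (K n) (nabs n)" using local by (simp add: loc_ctx_def)

lemma av: "av_ctx (K n) (nabs n)" using loc_ctx.F[OF loc] loc_ctx.AV[OF loc] by (simp add: av_ctx_def)

lemma ne: "ne_ctx (K 0) (K n) (nabs n) (nabs 0) (sexp n)"
  unfolding ne_ctx_def using sub[of n] sub[of 0] sexp[of n] local[of n] local[of 0]
  by (auto simp: normalized_local_field_def)

lemma coord_bound: "\<exists>C>0. \<forall>x\<in>K n. \<forall>i. nabs n (coords (K 0) (bs n) x i) \<le> C * nabs n x"
proof -
  interpret B: basis_ctx "K 0" "K n" "bs n" using basis .
  interpret N: ne_ctx "K 0" "K n" "nabs n" "nabs 0" "sexp n" using ne .
  have "is_basis (K 0) (K n) (bs n)" using B.B .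
  then obtain C where C: "C > 0" "\<forall>c. (\<forall>i<length (bs n). c i \<in> K 0) \<longrightarrow> (\<forall>i<length (bs n). nabs n (c i) \<le> C * nabs n (lc (bs n) c))"
    using N.norm_equiv[of "bs n"] unfolding is_basis_def by blast
  have "nabs n (coords (K 0) (bs n) x i) \<le> C * nabs n x" if x: "x \<in> K n" for x i
  proof (cases "i < length (bs n)")
    case True
    have "nabs n (coords (K 0) (bs n) x i) \<le> C * nabs n (lc (bs n) (coords (K 0) (bs n) x))"
      using C(2) B.coords_in[OF x] True by blast
    then show ?thesis using B.coords_lc[OF x] by simp
  next
    case False
    then show ?thesis using B.coords_out[OF x] N.A.a0 N.A.nonneg[OF x] C(1) by simp
  qed
  then show ?thesis using C(1) by blast
qed

lemma kbar_in: "y \<in> Kbar K \<Longrightarrow> y n \<in> K n" unfolding Kbar_def by blast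

lemma phi_in: "y \<in> Kbar K \<Longrightarrow> phi n i y \<in> k"
  unfolding phi_def using basis_ctx.coords_in[OF basis kbar_in] .

lemma phi_lin: "c \<in> k \<Longrightarrow> y \<in> Kbar K \<Longrightarrow> z \<in> Kbar K \<Longrightarrow>
   phi n i (\<lambda>m. c * y m + z m) = c * phi n i y + phi n i z"
  unfolding phi_def using basis_ctx.coords_lin[OF basis _ kbar_in kbar_in] by simp

lemma phi_lc: "y \<in> Kbar K \<Longrightarrow> y n = (\<Sum>i<dd n. phi n i y * bs n ! i)"
  unfolding phi_def dd_def using basis_ctx.coords_lc[OF basis kbar_in] unfolding lc_def .

lemma bs_in: "i < dd n \<Longrightarrow> bs n ! i \<in> K n"
  using basis_ctx.bs_in[OF basis, of n] unfolding dd_def by (meson nth_mem subsetD)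

definition "kap n = (of_nat (mdeg K 0) / of_nat (mdeg K n) :: 'a)"

lemma kap_in: "kap n \<in> k" unfolding kap_def using k_sub by (intro sf_divide sf_of_nat) auto
lemma kap_nz: "kap n \<noteq> 0" unfolding kap_def using mdeg_pos[of 0] mdeg_pos[of n] by simp

lemma Tn0: "Tn K 0 n x = kap n * field_trace k (K n) x" unfolding Tn_def kap_def ..

lemma Tn0_in: "x \<in> K n \<Longrightarrow> Tn K 0 n x \<in> k"
  unfolding Tn0 using kap_in ft_in[OF fin] k_sub sf_mult by blast

lemma Tn_same: assumes "K j = K n" "j < n" "y \<in> Kbar K" shows "y j = y n"
proof -
  have "y j = Tn K j n (y n)" using assms unfolding Kbar_def by blast
  also have "\<dots> = y n"
    unfolding Tn_def mdeg_def assms(1) using ft_self[OF sub(1) kbar_in[OF assms(3)]] mdeg_pos[of n]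
    unfolding mdeg_def by simp
  finally show ?thesis .
qed

lemma pairing_eq: "pairing K \<xi> y = Tn K 0 (LEAST j. \<xi> \<in> K j) (\<xi> * y (LEAST j. \<xi> \<in> K j))"
  unfolding pairing_def Let_def ..

lemma least_eq: assumes "\<xi> \<in> K j" "j = 0 \<or> \<xi> \<notin> K (j - 1)" shows "(LEAST j. \<xi> \<in> K j) = j"
proof (rule Least_equality)
  show "\<xi> \<in> K j" by fact
next
  fix m assume m: "\<xi> \<in> K m"
  show "j \<le> m"
  proof (rule ccontr)
    assume "\<not> j \<le> m"
    then have mj: "m < j" by simp
    then have "\<xi> \<notin> K (j - 1)" using assms(2) by simp
    moreover have "K m \<subseteq> K (j - 1)" using mono mj by simp
    ultimately show False using m by blast
  qed
qed

lemma pairing_zero: "pairing K 0 y = 0"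
proof -
  have "(LEAST j. (0::'a) \<in> K j) = 0" using least_eq[of 0 0] sf_0[OF k_sub] by simp
  then show ?thesis unfolding pairing_eq Tn0 using ft_zero[OF fin] by simp
qed

lemma pairing_in: "y \<in> Kbar K \<Longrightarrow> \<xi> \<in> (\<Union>n. K n) \<Longrightarrow> pairing K \<xi> y \<in> k"
proof -
  assume y: "y \<in> Kbar K" and "\<xi> \<in> (\<Union>n. K n)"
  then obtain n where "\<xi> \<in> K n" by blast
  then have "\<xi> \<in> K (LEAST j. \<xi> \<in> K j)" by (rule LeastI)
  then show ?thesis unfolding pairing_eq
    using Tn0_in kbar_in[OF y] sf_mult[OF sub(1)] by blast
qed

lemma phi_pairing:
  assumes i: "i < dd n"
  shows "\<exists>c\<in>k. \<exists>\<xi>1\<in>(\<Union>n. K n). \<exists>\<xi>2\<in>(\<Union>n. K n). \<forall>y\<in>Kbar K. phi n i y = c * (pairing K \<xi>1 y - pairing K \<xi>2 y)"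
proof -
  obtain \<xi> where \<xi>: "\<xi> \<in> K n" "\<forall>w\<in>K n. coords k (bs n) w i = field_trace k (K n) (\<xi> * w)"
    using dual[OF fin[of n]] i unfolding dd_def bs_def by blast
  define j where "j = (LEAST j. K j = K n)"
  have Kj: "K j = K n" unfolding j_def by (rule LeastI) simp
  have jn: "j \<le> n" unfolding j_def by (rule Least_le) simp
  have yj: "y j = y n" if "y \<in> Kbar K" for y
    using Tn_same[OF Kj _ that] jn by (cases "j = n") auto
  have ft_eq: "field_trace k (K n) = field_trace k (K j)" using Kj by simp
  have phi_eq: "phi n i y = inverse (kap j) * Tn K 0 j (\<xi> * y j)" if y: "y \<in> Kbar K" for y
    unfolding phi_def Tn0 using \<xi>(2) kbar_in[OF y] yj[OF y] ft_eq kap_nz[of j] by simp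
  have ikap: "inverse (kap j) \<in> k" using kap_in sf_inverse[OF k_sub] by blast
  have \<xi>j: "\<xi> \<in> K j" using \<xi>(1) Kj by simp
  have z0: "(0::'a) \<in> (\<Union>n. K n)" using sf_0[OF k_sub] by blast
  show ?thesis
  proof (cases "j = 0 \<or> \<xi> \<notin> K (j - 1)")
    case True
    have p: "pairing K \<xi> y = Tn K 0 j (\<xi> * y j)" for y
      unfolding pairing_eq least_eq[OF \<xi>j True] ..
    have "\<forall>y\<in>Kbar K. phi n i y = inverse (kap j) * (pairing K \<xi> y - pairing K 0 y)"
      using phi_eq p pairing_zero by simp
    moreover have "\<xi> \<in> (\<Union>n. K n)" using \<xi>j by blast
    ultimately show ?thesis using ikap z0 by blast
  next
    case False
    then have j0: "j > 0" and \<xi>1: "\<xi> \<in> K (j - 1)" by auto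
    have "K (j - 1) \<noteq> K n"
    proof
      assume "K (j - 1) = K n"
      then have "j \<le> j - 1" unfolding j_def by (rule Least_le)
      then show False using j0 by simp
    qed
    moreover have "K (j - 1) \<subseteq> K j" using mono by simp
    ultimately obtain \<xi>0 where \<xi>0: "\<xi>0 \<in> K j" "\<xi>0 \<notin> K (j - 1)" using Kj by blast
    have s1: "\<xi> + \<xi>0 \<in> K j" using \<xi>j \<xi>0 sf_add[OF sub(1)] by blast
    have s2: "\<xi> + \<xi>0 \<notin> K (j - 1)"
    proof
      assume "\<xi> + \<xi>0 \<in> K (j - 1)"
      then have "(\<xi> + \<xi>0) - \<xi> \<in> K (j - 1)" using \<xi>1 sf_diff[OF sub(1)] by blast
      then show False using \<xi>0 by simp
    qed
    have l1: "(LEAST j. \<xi> + \<xi>0 \<in> K j) = j" using least_eq[OF s1] s2 by blast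
    have l2: "(LEAST j. \<xi>0 \<in> K j) = j" using least_eq[OF \<xi>0(1)] \<xi>0(2) by blast
    have p1: "pairing K (\<xi> + \<xi>0) y = Tn K 0 j ((\<xi> + \<xi>0) * y j)" for y
      unfolding pairing_eq l1 ..
    have p2: "pairing K \<xi>0 y = Tn K 0 j (\<xi>0 * y j)" for y
      unfolding pairing_eq l2 ..
    have "Tn K 0 j (\<xi> * y j) = pairing K (\<xi> + \<xi>0) y - pairing K \<xi>0 y" if y: "y \<in> Kbar K" for y
    proof -
      have yjK: "y j \<in> K j" using kbar_in[OF y] .
      have "(\<xi> + \<xi>0) * y j = \<xi> * y j + \<xi>0 * y j" by (simp add: algebra_simps)
      then have "field_trace k (K j) ((\<xi> + \<xi>0) * y j) = field_trace k (K j) (\<xi> * y j) + field_trace k (K j) (\<xi>0 * y j)"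
        using ft_add[OF fin] \<xi>j \<xi>0(1) yjK sf_mult[OF sub(1)] by metis
      then show ?thesis unfolding p1 p2 Tn0 by (simp add: algebra_simps)
    qed
    then have "\<forall>y\<in>Kbar K. phi n i y = inverse (kap j) * (pairing K (\<xi> + \<xi>0) y - pairing K \<xi>0 y)"
      using phi_eq by simp
    moreover have "\<xi> + \<xi>0 \<in> (\<Union>n. K n)" "\<xi>0 \<in> (\<Union>n. K n)" using s1 \<xi>0(1) by blast+
    ultimately show ?thesis using ikap by blast
  qed
qed

lemma pairing_phi:
  assumes "\<xi> \<in> (\<Union>n. K n)"
  shows "\<exists>j g. (\<forall>i<dd j. g i \<in> k) \<and> (\<forall>y\<in>Kbar K. pairing K \<xi> y = (\<Sum>i<dd j. phi j i y * g i))"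
proof -
  define j where "j = (LEAST j. \<xi> \<in> K j)"
  have \<xi>j: "\<xi> \<in> K j" unfolding j_def using assms by (auto intro: LeastI)
  define g where "g i = kap j * field_trace k (K j) (\<xi> * bs j ! i)" for i
  have gk: "\<forall>i<dd j. g i \<in> k" unfolding g_def using kap_in ft_in[OF fin] bs_in \<xi>j sf_mult[OF sub(1)] sf_mult[OF k_sub]
    by blast
  have "pairing K \<xi> y = (\<Sum>i<dd j. phi j i y * g i)" if y: "y \<in> Kbar K" for y
  proof -
    have "\<xi> * y j = (\<Sum>i<dd j. phi j i y * (\<xi> * bs j ! i))"
      using phi_lc[OF y, of j] by (simp add: sum_distrib_left algebra_simps)
    then have "field_trace k (K j) (\<xi> * y j) = (\<Sum>i<dd j. phi j i y * field_trace k (K j) (\<xi> * bs j ! i))"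
      using ft_sum[OF fin, of "{..<dd j}" "\<lambda>i. phi j i y" "\<lambda>i. \<xi> * bs j ! i"] phi_in[OF y] bs_in \<xi>j
        sf_mult[OF sub(1)] by simp
    then show ?thesis unfolding pairing_eq j_def[symmetric] Tn0 g_def
      by (simp add: sum_distrib_left algebra_simps)
  qed
  then show ?thesis using gk by blast
qed

end

lemma powr_lt_cancel: "(0::real) < p \<Longrightarrow> 0 \<le> u \<Longrightarrow> 0 \<le> v \<Longrightarrow> u powr p < v powr p \<Longrightarrow> u < v"
  using powr_mono2[of p v u] by force

lemma small_radius:
  fixes T M s :: real
  assumes "T > 0" "M \<ge> 0" "s > 0"
  shows "\<exists>m::nat. (1 / Suc m) powr s * M < T"
proof -
  define v where "v = (T / (M + 1)) powr (1 / s)"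
  have v: "v > 0" unfolding v_def using assms by simp
  obtain m where m: "inverse (real (Suc m)) < v" using reals_Archimedean[OF v] by blast
  have "(1 / Suc m) powr s < v powr s" using m assms(3) by (intro powr_less_mono2) (auto simp: divide_inverse)
  also have "v powr s = T / (M + 1)" unfolding v_def using assms by (simp add: powr_powr)
  finally have h: "(1 / Suc m) powr s < T / (M + 1)" .
  have "(1 / Suc m) powr s * M \<le> T / (M + 1) * M" using h assms(2) by (intro mult_right_mono) auto
  also have "\<dots> < T" using assms by (simp add: field_simps)
  finally show ?thesis by blast
qed

context main_ctx
begin

definition "kball x r = {z \<in> k. a0 (z - x) < r}"

lemma top_strong: "topspace (strong_top K nabs) = Kbar K" unfolding strong_top_def by auto
lemma top_weak: "topspace (weak_top K nabs) = Kbar K" unfolding weak_top_def by auto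
lemma top_k: "topspace (k_top k a0) = k" unfolding k_top_def by auto

sublocale A0: av_ctx k a0 using av[of 0] .

lemma kball_open: "x \<in> k \<Longrightarrow> r > 0 \<Longrightarrow> openin (k_top k a0) (kball x r)"
  unfolding k_top_def kball_def by (rule topology_generated_by_Basis) blast

lemma k_open_ball:
  assumes "openin (k_top k a0) U" "x \<in> U" shows "\<exists>r>0. kball x r \<subseteq> U"
proof -
  have "generate_topology_on (insert k {{z \<in> k. a0 (z - x) < r} | x r. x \<in> k \<and> r > 0}) U"
    using assms(1) unfolding k_top_def by (rule openin_topology_generated_by)
  then show ?thesis using assms(2)
  proof (induction arbitrary: x)
    case Empty then show ?case by simp
  next
    case (Int A B)
    obtain r1 where r1: "r1 > 0" "kball x r1 \<subseteq> A" using Int by blast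
    obtain r2 where r2: "r2 > 0" "kball x r2 \<subseteq> B" using Int by blast
    have "kball x (min r1 r2) \<subseteq> A \<inter> B" using r1 r2 unfolding kball_def by auto
    then show ?case using r1 r2 by (intro exI[of _ "min r1 r2"]) auto
  next
    case (UN KK)
    then obtain A where "A \<in> KK" "x \<in> A" by blast
    then show ?case using UN.IH by blast
  next
    case (Basis s)
    show ?case
    proof (cases "s = k")
      case True then show ?thesis unfolding kball_def by (intro exI[of _ 1]) auto
    next
      case False
      then obtain c r where s: "s = {z \<in> k. a0 (z - c) < r}" "c \<in> k" "r > 0" using Basis by blast
      have "kball x r \<subseteq> s"
      proof
        fix z assume "z \<in> kball x r"
        then have z: "z \<in> k" "a0 (z - x) < r" unfolding kball_def by auto
        have "x \<in> k" "a0 (x - c) < r" using Basis.prems s by auto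
        then have "a0 (z - c) < r" using A0.ultra_diff[OF z(1) \<open>x \<in> k\<close> s(2)] z by simp
        then show "z \<in> s" using s z by simp
      qed
      then show ?thesis using s by blast
    qed
  qed
qed

lemma weak_sub: "\<xi> \<in> (\<Union>n. K n) \<Longrightarrow> openin (k_top k a0) U \<Longrightarrow> openin (weak_top K nabs) {y \<in> Kbar K. pairing K \<xi> y \<in> U}"
  unfolding weak_top_def by (rule topology_generated_by_Basis) blast

lemma strong_ball: "y \<in> Kbar K \<Longrightarrow> r > 0 \<Longrightarrow>
  openin (strong_top K nabs) {z \<in> Kbar K. seminorm K nabs n (\<lambda>i. z i - y i) < r}"
  unfolding strong_top_def by (rule topology_generated_by_Basis) blast

lemma seminorm_eq: "seminorm K nabs n (\<lambda>i. z i - y i) = nabs n (z n - y n) powr (1 / real (mdeg K n))"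
  unfolding seminorm_def ..

lemma kdiff: "x \<in> k \<Longrightarrow> y \<in> k \<Longrightarrow> x - y \<in> k" using sf_diff[OF k_sub] by blast

lemma phi_diff: "y \<in> Kbar K \<Longrightarrow> z \<in> Kbar K \<Longrightarrow> phi n i z - phi n i y = coords k (bs n) (z n - y n) i"
proof -
  assume y: "y \<in> Kbar K" and z: "z \<in> Kbar K"
  have "coords k (bs n) ((-1) * y n + z n) i = (-1) * coords k (bs n) (y n) i + coords k (bs n) (z n) i"
    using basis_ctx.coords_lin[OF basis _ kbar_in[OF y] kbar_in[OF z]] sf_uminus[OF k_sub sf_1[OF k_sub]] by blast
  then show ?thesis unfolding phi_def by simp
qed

lemma nabs_k: "x \<in> k \<Longrightarrow> nabs n x = a0 x powr sexp n" using sexp(2) by blast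

lemma phi_strong_cont: "continuous_map (strong_top K nabs) (k_top k a0) (phi n i)"
  unfolding k_top_def
proof (rule continuous_on_generated_topo)
  show "phi n i ` topspace (strong_top K nabs) \<subseteq> \<Union> (insert k {{z \<in> k. a0 (z - x) < r} |x r. x \<in> k \<and> 0 < r})"
    using phi_in unfolding top_strong by auto
next
  fix U assume U: "U \<in> insert k {{z \<in> k. a0 (z - x) < r} |x r. x \<in> k \<and> 0 < r}"
  show "openin (strong_top K nabs) (phi n i -` U \<inter> topspace (strong_top K nabs))"
  proof (cases "U = k")
    case True
    then have "phi n i -` U \<inter> topspace (strong_top K nabs) = topspace (strong_top K nabs)"
      using phi_in unfolding top_strong by auto
    then show ?thesis by simp
  next
    case False
    then obtain x r where U: "U = {z \<in> k. a0 (z - x) < r}" "x \<in> k" "r > 0" using U by blast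
    have eq: "phi n i -` U \<inter> topspace (strong_top K nabs) = {y \<in> Kbar K. a0 (phi n i y - x) < r}"
      unfolding U top_strong using phi_in by auto
    obtain C where C: "C > 0" "\<forall>x\<in>K n. \<forall>i. nabs n (coords (K 0) (bs n) x i) \<le> C * nabs n x"
      using coord_bound by blast
    interpret N: av_ctx "K n" "nabs n" using av .
    define s where "s = sexp n"
    define m where "m = real (mdeg K n)"
    have s: "s > 0" unfolding s_def using sexp by simp
    have m: "m > 0" unfolding m_def using mdeg_pos by simp
    show ?thesis unfolding eq
    proof (subst openin_subopen, intro ballI)
      fix y0 assume y0: "y0 \<in> {y \<in> Kbar K. a0 (phi n i y - x) < r}"
      define t where "t = (r powr s / C) powr (1 / m)"
      have t: "t > 0" unfolding t_def using U C by simp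
      define V where "V = {z \<in> Kbar K. seminorm K nabs n (\<lambda>i. z i - y0 i) < t}"
      have "openin (strong_top K nabs) V" unfolding V_def using strong_ball y0 t by blast
      moreover have "y0 \<in> V" unfolding V_def seminorm_eq using y0 t m N.a0 by simp
      moreover have "V \<subseteq> {y \<in> Kbar K. a0 (phi n i y - x) < r}"
      proof
        fix z assume "z \<in> V"
        then have z: "z \<in> Kbar K" "nabs n (z n - y0 n) powr (1 / m) < t"
          unfolding V_def seminorm_eq m_def by auto
        have y0K: "y0 \<in> Kbar K" using y0 by simp
        have dK: "z n - y0 n \<in> K n" using kbar_in[OF z(1)] kbar_in[OF y0K] sf_diff[OF sub(1)] by blast
        have "nabs n (z n - y0 n) < r powr s / C"
          using powr_lt_cancel[of "1 / m" "nabs n (z n - y0 n)" "r powr s / C"] z(2) m C(1)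
            N.nonneg[OF dK] unfolding t_def by simp
        then have "C * nabs n (z n - y0 n) < r powr s" using C(1) by (simp add: field_simps)
        moreover have "nabs n (phi n i z - phi n i y0) \<le> C * nabs n (z n - y0 n)"
          unfolding phi_diff[OF y0K z(1)] using C(2) dK by blast
        ultimately have h: "nabs n (phi n i z - phi n i y0) < r powr s" by simp
        have pk: "phi n i z - phi n i y0 \<in> k" using phi_in z(1) y0K kdiff by blast
        have e: "nabs n (phi n i z - phi n i y0) = a0 (phi n i z - phi n i y0) powr s"
          using nabs_k[OF pk] unfolding s_def .
        have "a0 (phi n i z - phi n i y0) powr s < r powr s" using h unfolding e .
        then have "a0 (phi n i z - phi n i y0) < r"
          using powr_lt_cancel[OF s] A0.nonneg[OF pk] U(3) by simp
        moreover have "a0 (phi n i y0 - x) < r" using y0 by simp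
        ultimately have "a0 (phi n i z - x) < r"
          using A0.ultra_diff[OF phi_in[OF z(1), of n i] phi_in[OF y0K, of n i] U(2)] by simp
        then show "z \<in> {y \<in> Kbar K. a0 (phi n i y - x) < r}" using z by simp
      qed
      ultimately show "\<exists>T. openin (strong_top K nabs) T \<and> y0 \<in> T \<and> T \<subseteq> {y \<in> Kbar K. a0 (phi n i y - x) < r}"
        by blast
    qed
  qed
qed

lemma phi_weak_open: assumes x: "x \<in> k" shows "openin (weak_top K nabs) {y \<in> Kbar K. a0 (phi n i y - x) < r}"
proof (cases "i < dd n")
  case False
  have "phi n i y = 0" if "y \<in> Kbar K" for y
    unfolding phi_def using basis_ctx.coords_out[OF basis kbar_in[OF that]] False unfolding dd_def by simp
  then have eq: "{y \<in> Kbar K. a0 (phi n i y - x) < r} = {y \<in> Kbar K. a0 (0 - x) < r}" by auto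
  show ?thesis
  proof (cases "a0 (0 - x) < r")
    case True
    then have "{y \<in> Kbar K. a0 (phi n i y - x) < r} = topspace (weak_top K nabs)" unfolding eq top_weak by simp
    then show ?thesis by (simp only: openin_topspace)
  next
    case False
    then have "{y \<in> Kbar K. a0 (phi n i y - x) < r} = {}" unfolding eq by simp
    then show ?thesis by (simp only: openin_empty)
  qed
next
  case True
  obtain c \<xi>1 \<xi>2 where c: "c \<in> k" and \<xi>: "\<xi>1 \<in> (\<Union>n. K n)" "\<xi>2 \<in> (\<Union>n. K n)"
    and eq: "\<forall>y\<in>Kbar K. phi n i y = c * (pairing K \<xi>1 y - pairing K \<xi>2 y)"
    using phi_pairing[OF True] by blast
  show ?thesis
  proof (subst openin_subopen, intro ballI)
    fix y0 assume y0: "y0 \<in> {y \<in> Kbar K. a0 (phi n i y - x) < r}"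
    have y0K: "y0 \<in> Kbar K" using y0 by simp
    have r: "r > 0" using y0 A0.nonneg[OF kdiff[OF phi_in[OF y0K, of n i] x]] by simp
    have ac: "a0 c \<ge> 0" using A0.nonneg[OF c] .
    define \<rho> where "\<rho> = r / (a0 c + 1)"
    have \<rho>: "\<rho> > 0" unfolding \<rho>_def using r ac by simp
    have c\<rho>: "a0 c * \<rho> < r" unfolding \<rho>_def using r ac by (simp add: field_simps)
    define V where "V = {y \<in> Kbar K. pairing K \<xi>1 y \<in> kball (pairing K \<xi>1 y0) \<rho>} \<inter>
        {y \<in> Kbar K. pairing K \<xi>2 y \<in> kball (pairing K \<xi>2 y0) \<rho>}"
    have "openin (weak_top K nabs) V" unfolding V_def
      using weak_sub[OF \<xi>(1) kball_open[OF pairing_in[OF y0K \<xi>(1)] \<rho>]]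
        weak_sub[OF \<xi>(2) kball_open[OF pairing_in[OF y0K \<xi>(2)] \<rho>]] by blast
    moreover have "y0 \<in> V" unfolding V_def kball_def using y0K pairing_in[OF y0K] \<xi> \<rho> A0.a0 by simp
    moreover have "V \<subseteq> {y \<in> Kbar K. a0 (phi n i y - x) < r}"
    proof
      fix z assume "z \<in> V"
      then have z: "z \<in> Kbar K" "a0 (pairing K \<xi>1 z - pairing K \<xi>1 y0) < \<rho>" "a0 (pairing K \<xi>2 z - pairing K \<xi>2 y0) < \<rho>"
        unfolding V_def kball_def by auto
      define u1 where "u1 = pairing K \<xi>1 z - pairing K \<xi>1 y0"
      define u2 where "u2 = pairing K \<xi>2 z - pairing K \<xi>2 y0"
      have u: "u1 \<in> k" "u2 \<in> k" unfolding u1_def u2_def using pairing_in z(1) y0K \<xi> kdiff by blast+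
      have "phi n i z - phi n i y0 = c * (u1 - u2)" unfolding u1_def u2_def using eq z(1) y0K
        by (simp add: algebra_simps)
      then have "a0 (phi n i z - phi n i y0) = a0 c * a0 (u1 - u2)" using A0.mult[OF c kdiff[OF u]] by simp
      also have "\<dots> \<le> a0 c * \<rho>"
        using A0.ultra_sub[OF u] z(2,3) ac unfolding u1_def u2_def by (intro mult_left_mono) auto
      finally have "a0 (phi n i z - phi n i y0) < r" using c\<rho> by simp
      moreover have "a0 (phi n i y0 - x) < r" using y0 by simp
      ultimately have "a0 (phi n i z - x) < r"
        using A0.ultra_diff[OF phi_in[OF z(1), of n i] phi_in[OF y0K, of n i] x] by simp
      then show "z \<in> {y \<in> Kbar K. a0 (phi n i y - x) < r}" using z by simp
    qed
    ultimately show "\<exists>T. openin (weak_top K nabs) T \<and> y0 \<in> T \<and> T \<subseteq> {y \<in> Kbar K. a0 (phi n i y - x) < r}"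
      by blast
  qed
qed

end

lemma ss_Int:
  assumes "A \<subseteq> Pow sp" "a \<in> sigma_sets sp A" "b \<in> sigma_sets sp A"
  shows "a \<inter> b \<in> sigma_sets sp A"
proof -
  have "a \<subseteq> sp" "b \<subseteq> sp" using sigma_sets_into_sp[OF assms(1)] assms(2,3) by auto
  then have "a \<inter> b = sp - ((sp - a) \<union> (sp - b))" by auto
  moreover have "sp - ((sp - a) \<union> (sp - b)) \<in> sigma_sets sp A"
    using assms by (intro sigma_sets.Compl sigma_sets_Un) auto
  ultimately show ?thesis by simp
qed

lemma cont_borel:
  assumes f: "continuous_map X Y f" and B: "B \<in> sigma_sets (topspace Y) {U. openin Y U}"
  shows "{x \<in> topspace X. f x \<in> B} \<in> sigma_sets (topspace X) {U. openin X U}"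
  using B
proof (induction rule: sigma_sets.induct)
  case (Basic a)
  then show ?case using openin_continuous_map_preimage[OF f] by auto
next
  case Empty
  then show ?case by (simp add: sigma_sets.Empty)
next
  case (Compl a)
  have "{x \<in> topspace X. f x \<in> topspace Y - a} = topspace X - {x \<in> topspace X. f x \<in> a}"
    using f unfolding continuous_map_def by auto
  then show ?case using Compl.IH by (simp add: sigma_sets.Compl)
next
  case (Union A)
  have "{x \<in> topspace X. f x \<in> (\<Union>i. A i)} = (\<Union>i. {x \<in> topspace X. f x \<in> A i})" by auto
  then show ?case using Union.IH by (simp add: sigma_sets.Union)
qed

context main_ctx
begin

definition "Dk = (SOME D. countable D \<and> D \<subseteq> k \<and> (\<forall>x\<in>k. \<forall>e>0. \<exists>y\<in>D. a0 (x - y) < e))"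

lemma Dk: "countable Dk" "Dk \<subseteq> k" "\<And>x e. x \<in> k \<Longrightarrow> e > 0 \<Longrightarrow> \<exists>y\<in>Dk. a0 (x - y) < e"
proof -
  have "\<exists>D. countable D \<and> D \<subseteq> k \<and> (\<forall>x\<in>k. \<forall>e>0. \<exists>y\<in>D. a0 (x - y) < e)"
    using loc_ctx.separable[OF loc[of 0]] .
  from someI_ex[OF this] show "countable Dk" "Dk \<subseteq> k" "\<And>x e. x \<in> k \<Longrightarrow> e > 0 \<Longrightarrow> \<exists>y\<in>Dk. a0 (x - y) < e"
    unfolding Dk_def by blast+
qed

definition "Idx = (UNIV :: nat set) \<times> (UNIV :: nat set) \<times> Dk \<times> (UNIV :: nat set)"
definition "basic S = {z \<in> Kbar K. \<forall>(n, i, c, m)\<in>S. a0 (phi n i z - c) < 1 / Suc m}"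
definition "BB = basic ` {S. finite S \<and> S \<subseteq> Idx}"

lemma BB_countable: "countable BB"
proof -
  have "countable Idx" unfolding Idx_def using Dk(1) by simp
  then show ?thesis unfolding BB_def by (intro countable_image countable_Collect_finite_subset)
qed

lemma basic_sub: "basic S \<subseteq> Kbar K" unfolding basic_def by auto
lemma basic_empty: "basic {} = Kbar K" unfolding basic_def by auto
lemma basic_union: "basic (S1 \<union> S2) = basic S1 \<inter> basic S2" unfolding basic_def by blast
lemma basic_insert: "basic (insert e S) = basic {e} \<inter> basic S" unfolding basic_def by blast
lemma basic_single: "basic {(n, i, c, m)} = {z \<in> Kbar K. a0 (phi n i z - c) < 1 / Suc m}"
  unfolding basic_def by auto

lemma basic_open:
  assumes top: "topspace T = Kbar K"
    and single: "\<And>n i c m. c \<in> Dk \<Longrightarrow> openin T {z \<in> Kbar K. a0 (phi n i z - c) < 1 / Suc m}"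
  shows "finite S \<Longrightarrow> S \<subseteq> Idx \<Longrightarrow> openin T (basic S)"
proof (induction S rule: finite_induct)
  case empty then show ?case unfolding basic_empty top[symmetric] by simp
next
  case (insert e S)
  obtain n i c m where e: "e = (n, i, c, m)" by (cases e) auto
  have c: "c \<in> Dk" using insert.prems e unfolding Idx_def by auto
  have o1: "openin T {z \<in> Kbar K. a0 (phi n i z - c) < 1 / Suc m}" by (rule single[OF c])
  have o2: "openin T (basic S)" using insert.IH insert.prems by simp
  have eq: "basic (insert e S) = {z \<in> Kbar K. a0 (phi n i z - c) < 1 / Suc m} \<inter> basic S"
    using basic_insert[of e S] basic_single[of n i c m] e by simp
  show ?case unfolding eq by (rule openin_Int[OF o1 o2])
qed

lemma basic_strong_open: "finite S \<Longrightarrow> S \<subseteq> Idx \<Longrightarrow> openin (strong_top K nabs) (basic S)"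
proof (rule basic_open[OF top_strong])
  fix n i c m assume c: "c \<in> Dk"
  have ck: "c \<in> k" using c Dk(2) by blast
  have "openin (strong_top K nabs) {x \<in> topspace (strong_top K nabs). phi n i x \<in> kball c (1 / Suc m)}"
    by (rule openin_continuous_map_preimage[OF phi_strong_cont kball_open[OF ck]]) simp
  moreover have "{x \<in> topspace (strong_top K nabs). phi n i x \<in> kball c (1 / Suc m)} = {z \<in> Kbar K. a0 (phi n i z - c) < 1 / Suc m}"
    unfolding top_strong kball_def using phi_in by auto
  ultimately show "openin (strong_top K nabs) {z \<in> Kbar K. a0 (phi n i z - c) < 1 / Suc m}" by simp
qed

lemma basic_weak_open: "finite S \<Longrightarrow> S \<subseteq> Idx \<Longrightarrow> openin (weak_top K nabs) (basic S)"
proof (rule basic_open[OF top_weak])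
  fix n i c m assume c: "c \<in> Dk"
  have ck: "c \<in> k" using c Dk(2) by blast
  show "openin (weak_top K nabs) {z \<in> Kbar K. a0 (phi n i z - c) < 1 / Suc m}"
    by (rule phi_weak_open[OF ck])
qed

lemma phi_cl: "phi n i \<in> cont_lin_functionals K nabs"
  unfolding cont_lin_functionals_def using phi_in phi_lin phi_strong_cont by blast

lemma basic_A: "finite S \<Longrightarrow> S \<subseteq> Idx \<Longrightarrow> basic S \<in> A_sigma K nabs"
proof (induction S rule: finite_induct)
  case empty then show ?case unfolding basic_empty A_sigma_def by (metis sigma_sets_top)
next
  case (insert e S)
  obtain n i c m where e: "e = (n, i, c, m)" by (cases e) auto
  have c: "c \<in> k" using insert.prems e Dk(2) unfolding Idx_def by auto
  have "kball c (1 / Suc m) \<in> borel_sets (k_top k a0)"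
    unfolding borel_sets_def using kball_open[OF c] by (intro sigma_sets.Basic) simp
  moreover have "basic {e} = {y \<in> Kbar K. phi n i y \<in> kball c (1 / Suc m)}"
    unfolding e basic_single kball_def using phi_in by auto
  ultimately have e1: "basic {e} \<in> A_sigma K nabs"
    unfolding A_sigma_def using phi_cl by (intro sigma_sets.Basic) blast
  have e2: "basic S \<in> A_sigma K nabs" using insert by auto
  have gen: "{{y \<in> Kbar K. f y \<in> B} | f B. f \<in> cont_lin_functionals K nabs \<and> B \<in> borel_sets (k_top k a0)} \<subseteq> Pow (Kbar K)"
    by auto
  have "basic {e} \<inter> basic S \<in> A_sigma K nabs"
    unfolding A_sigma_def by (rule ss_Int[OF gen e1[unfolded A_sigma_def] e2[unfolded A_sigma_def]])
  then show ?case using basic_insert[of e S] by simp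
qed

lemma nbhd:
  assumes y: "y \<in> Kbar K"
  shows "\<exists>S. finite S \<and> S \<subseteq> Idx \<and> y \<in> basic S \<and> (\<forall>z\<in>basic S. \<forall>i<dd n. a0 (phi n i z - phi n i y) < 1 / Suc m)"
proof -
  have "\<forall>i. \<exists>c. c \<in> Dk \<and> a0 (phi n i y - c) < 1 / Suc m"
  proof
    fix i
    have "1 / real (Suc m) > 0" by simp
    then show "\<exists>c. c \<in> Dk \<and> a0 (phi n i y - c) < 1 / Suc m" using Dk(3)[OF phi_in[OF y, of n i]] by blast
  qed
  then obtain cf where cf: "\<And>i. cf i \<in> Dk" "\<And>i. a0 (phi n i y - cf i) < 1 / Suc m" by metis
  define S where "S = (\<lambda>i. (n, i, cf i, m)) ` {..<dd n}"
  have "finite S" unfolding S_def by simp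
  moreover have "S \<subseteq> Idx" unfolding S_def Idx_def using cf(1) by auto
  moreover have "y \<in> basic S" unfolding S_def basic_def using y cf(2) by auto
  moreover have "a0 (phi n i z - phi n i y) < 1 / Suc m" if z: "z \<in> basic S" and i: "i < dd n" for z i
  proof -
    have zK: "z \<in> Kbar K" using z basic_sub by blast
    have "a0 (phi n i z - cf i) < 1 / Suc m" using z i unfolding S_def basic_def by auto
    moreover have "a0 (cf i - phi n i y) < 1 / Suc m"
      using cf(2)[of i] A0.sym[OF phi_in[OF y, of n i]] cf(1)[of i] Dk(2) by auto
    ultimately show ?thesis
      using A0.ultra_diff[OF phi_in[OF zK, of n i], of "cf i" "phi n i y"] cf(1)[of i] Dk(2) phi_in[OF y, of n i]
      by auto
  qed
  ultimately show ?thesis by blast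
qed

lemma gen_local:
  assumes "generate_topology_on G W"
    and base: "\<And>s y. s \<in> G \<Longrightarrow> y \<in> s \<Longrightarrow> \<exists>S. finite S \<and> S \<subseteq> Idx \<and> y \<in> basic S \<and> basic S \<subseteq> s"
  shows "y \<in> W \<Longrightarrow> \<exists>S. finite S \<and> S \<subseteq> Idx \<and> y \<in> basic S \<and> basic S \<subseteq> W"
  using assms(1)
proof (induction arbitrary: y)
  case Empty then show ?case by simp
next
  case (Int a b)
  have ya: "y \<in> a" and yb: "y \<in> b" using Int.prems by auto
  obtain S1 where S1: "finite S1" "S1 \<subseteq> Idx" "y \<in> basic S1" "basic S1 \<subseteq> a" using Int.IH(1)[OF ya] by blast
  obtain S2 where S2: "finite S2" "S2 \<subseteq> Idx" "y \<in> basic S2" "basic S2 \<subseteq> b" using Int.IH(2)[OF yb] by blast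
  show ?case using S1 S2 by (intro exI[of _ "S1 \<union> S2"]) (auto simp: basic_union)
next
  case (UN KK)
  then obtain A where A: "A \<in> KK" "y \<in> A" by blast
  obtain S where "finite S" "S \<subseteq> Idx" "y \<in> basic S" "basic S \<subseteq> A" using UN.IH[OF A] by blast
  then show ?case using A by blast
next
  case (Basis s)
  then show ?case using base by blast
qed

lemma local_strong:
  assumes W: "openin (strong_top K nabs) W" and y: "y \<in> W"
  shows "\<exists>S. finite S \<and> S \<subseteq> Idx \<and> y \<in> basic S \<and> basic S \<subseteq> W"
proof (rule gen_local[OF openin_topology_generated_by[OF W[unfolded strong_top_def]] _ y])
  fix s y
  assume s: "s \<in> insert (Kbar K) {{z \<in> Kbar K. seminorm K nabs n (\<lambda>i. z i - y i) < r} | n y r. y \<in> Kbar K \<and> r > 0}"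
    and y: "y \<in> s"
  show "\<exists>S. finite S \<and> S \<subseteq> Idx \<and> y \<in> basic S \<and> basic S \<subseteq> s"
  proof (cases "s = Kbar K")
    case True
    then show ?thesis using y by (intro exI[of _ "{}"]) (auto simp: basic_empty)
  next
    case False
    then obtain n y' r where s: "s = {z \<in> Kbar K. seminorm K nabs n (\<lambda>i. z i - y' i) < r}" "y' \<in> Kbar K" "r > 0"
      using s by blast
    have yK: "y \<in> Kbar K" using y s by simp
    interpret N: av_ctx "K n" "nabs n" using av .
    define m where "m = real (mdeg K n)"
    have m: "m > 0" unfolding m_def using mdeg_pos by simp
    define sn where "sn = sexp n"
    have sn: "sn > 0" unfolding sn_def using sexp by simp
    define \<beta> where "\<beta> = nabs n (y n - y' n)"
    have dyK: "y n - y' n \<in> K n" using kbar_in[OF yK] kbar_in[OF s(2)] sf_diff[OF sub(1)] by blast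
    have \<beta>0: "\<beta> \<ge> 0" unfolding \<beta>_def using N.nonneg[OF dyK] .
    have "\<beta> powr (1 / m) < r" using y s unfolding seminorm_eq \<beta>_def m_def by simp
    define T where "T = r powr m"
    have T: "T > 0" unfolding T_def using s(3) by simp
    have "\<beta> = (\<beta> powr (1 / m)) powr m" using m \<beta>0 by (simp add: powr_powr powr_one)
    also have "\<dots> < T" unfolding T_def using \<open>\<beta> powr (1 / m) < r\<close> m by (intro powr_less_mono2) auto
    finally have \<beta>T: "\<beta> < T" .
    define M where "M = (\<Sum>i<dd n. nabs n (bs n ! i))"
    have M: "M \<ge> 0" unfolding M_def using N.nonneg bs_in by (intro sum_nonneg) auto
    obtain mm where mm: "(1 / Suc mm) powr sn * M < T" using small_radius[OF T M sn] by blast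
    obtain S where S: "finite S" "S \<subseteq> Idx" "y \<in> basic S"
      "\<forall>z\<in>basic S. \<forall>i<dd n. a0 (phi n i z - phi n i y) < 1 / Suc mm"
      using nbhd[OF yK, of n mm] by blast
    have "basic S \<subseteq> s"
    proof
      fix z assume z: "z \<in> basic S"
      have zK: "z \<in> Kbar K" using z basic_sub by blast
      have dk: "\<And>i. phi n i z - phi n i y \<in> k" using phi_in zK yK kdiff by blast
      have dK: "\<And>i. phi n i z - phi n i y \<in> K n" using dk sub(2) by blast
      have "z n - y n = (\<Sum>i<dd n. (phi n i z - phi n i y) * bs n ! i)"
        using phi_lc[OF zK, of n] phi_lc[OF yK, of n] by (simp add: sum_subtractf left_diff_distrib)
      then have "nabs n (z n - y n) \<le> (\<Sum>i<dd n. nabs n ((phi n i z - phi n i y) * bs n ! i))"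
        using N.sum_le[of "{..<dd n}" "\<lambda>i. (phi n i z - phi n i y) * bs n ! i"] dK bs_in sf_mult[OF sub(1)]
        by simp
      also have "\<dots> = (\<Sum>i<dd n. a0 (phi n i z - phi n i y) powr sn * nabs n (bs n ! i))"
      proof (intro sum.cong refl)
        fix i assume i: "i \<in> {..<dd n}"
        have "nabs n ((phi n i z - phi n i y) * bs n ! i) = nabs n (phi n i z - phi n i y) * nabs n (bs n ! i)"
          using N.mult[OF dK bs_in] i by simp
        also have "nabs n (phi n i z - phi n i y) = a0 (phi n i z - phi n i y) powr sn"
          using nabs_k[OF dk] unfolding sn_def .
        finally show "nabs n ((phi n i z - phi n i y) * bs n ! i) = a0 (phi n i z - phi n i y) powr sn * nabs n (bs n ! i)" .
      qed
      also have "\<dots> \<le> (\<Sum>i<dd n. (1 / Suc mm) powr sn * nabs n (bs n ! i))"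
      proof (intro sum_mono mult_right_mono)
        fix i assume i: "i \<in> {..<dd n}"
        show "a0 (phi n i z - phi n i y) powr sn \<le> (1 / Suc mm) powr sn"
        proof -
          have "a0 (phi n i z - phi n i y) < 1 / Suc mm" using S(4) z i by blast
          then show ?thesis using A0.nonneg[OF dk] sn by (intro powr_mono2) auto
        qed
        show "0 \<le> nabs n (bs n ! i)" using N.nonneg bs_in i by auto
      qed
      also have "\<dots> = (1 / Suc mm) powr sn * M" unfolding M_def by (simp add: sum_distrib_left)
      finally have zy: "nabs n (z n - y n) < T" using mm by simp
      have "nabs n (z n - y' n) \<le> max (nabs n (z n - y n)) (nabs n (y n - y' n))"
        using N.ultra_diff[OF kbar_in[OF zK] kbar_in[OF yK] kbar_in[OF s(2)]] .
      then have lt: "nabs n (z n - y' n) < T" using zy \<beta>T unfolding \<beta>_def by simp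
      have dz: "z n - y' n \<in> K n" using kbar_in[OF zK] kbar_in[OF s(2)] sf_diff[OF sub(1)] by blast
      have "nabs n (z n - y' n) powr (1 / m) < T powr (1 / m)"
        using lt m N.nonneg[OF dz] by (intro powr_less_mono2) auto
      also have "T powr (1 / m) = r" unfolding T_def using m s(3) by (simp add: powr_powr powr_one)
      finally show "z \<in> s" unfolding s seminorm_eq m_def[symmetric] using zK by simp
    qed
    then show ?thesis using S by blast
  qed
qed

lemma local_weak:
  assumes W: "openin (weak_top K nabs) W" and y: "y \<in> W"
  shows "\<exists>S. finite S \<and> S \<subseteq> Idx \<and> y \<in> basic S \<and> basic S \<subseteq> W"
proof (rule gen_local[OF openin_topology_generated_by[OF W[unfolded weak_top_def]] _ y])
  fix s y
  assume s: "s \<in> insert (Kbar K) {{y \<in> Kbar K. pairing K \<xi> y \<in> U} | \<xi> U. \<xi> \<in> (\<Union>n. K n) \<and> openin (k_top (K 0) (nabs 0)) U}"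
    and y: "y \<in> s"
  show "\<exists>S. finite S \<and> S \<subseteq> Idx \<and> y \<in> basic S \<and> basic S \<subseteq> s"
  proof (cases "s = Kbar K")
    case True
    then show ?thesis using y by (intro exI[of _ "{}"]) (auto simp: basic_empty)
  next
    case False
    then obtain \<xi> U where s: "s = {y \<in> Kbar K. pairing K \<xi> y \<in> U}" "\<xi> \<in> (\<Union>n. K n)" "openin (k_top k a0) U"
      using s by blast
    have yK: "y \<in> Kbar K" using y s by simp
    obtain r where r: "r > 0" "kball (pairing K \<xi> y) r \<subseteq> U" using k_open_ball[OF s(3)] y s by auto
    obtain j g where g: "\<forall>i<dd j. g i \<in> k" "\<forall>y\<in>Kbar K. pairing K \<xi> y = (\<Sum>i<dd j. phi j i y * g i)"
      using pairing_phi[OF s(2)] by blast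
    define G where "G = (\<Sum>i<dd j. a0 (g i))"
    have G: "G \<ge> 0" unfolding G_def using A0.nonneg g(1) by (intro sum_nonneg) auto
    obtain mm :: nat where mm': "(1 / real (Suc mm)) * G < r"
      using small_radius[OF r(1) G zero_less_one] by (auto simp: powr_one)
    obtain S where S: "finite S" "S \<subseteq> Idx" "y \<in> basic S"
      "\<forall>z\<in>basic S. \<forall>i<dd j. a0 (phi j i z - phi j i y) < 1 / Suc mm"
      using nbhd[OF yK, of j mm] by blast
    have "basic S \<subseteq> s"
    proof
      fix z assume z: "z \<in> basic S"
      have zK: "z \<in> Kbar K" using z basic_sub by blast
      have dk: "\<And>i. phi j i z - phi j i y \<in> k" using phi_in zK yK kdiff by blast
      have "pairing K \<xi> z - pairing K \<xi> y = (\<Sum>i<dd j. (phi j i z - phi j i y) * g i)"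
        using g(2) zK yK by (simp add: sum_subtractf left_diff_distrib)
      then have "a0 (pairing K \<xi> z - pairing K \<xi> y) \<le> (\<Sum>i<dd j. a0 ((phi j i z - phi j i y) * g i))"
        using A0.sum_le[of "{..<dd j}" "\<lambda>i. (phi j i z - phi j i y) * g i"] dk g(1) sf_mult[OF k_sub]
        by simp
      also have "\<dots> = (\<Sum>i<dd j. a0 (phi j i z - phi j i y) * a0 (g i))"
        using A0.mult[OF dk] g(1) by (intro sum.cong refl) auto
      also have "\<dots> \<le> (\<Sum>i<dd j. (1 / Suc mm) * a0 (g i))"
      proof (intro sum_mono mult_right_mono)
        fix i assume i: "i \<in> {..<dd j}"
        show "a0 (phi j i z - phi j i y) \<le> 1 / Suc mm" using S(4) z i by (auto intro: less_imp_le)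
        show "0 \<le> a0 (g i)" using A0.nonneg g(1) i by auto
      qed
      also have "\<dots> = (1 / Suc mm) * G" unfolding G_def by (simp add: sum_distrib_left)
      finally have "a0 (pairing K \<xi> z - pairing K \<xi> y) < r" using mm' by simp
      then have "pairing K \<xi> z \<in> kball (pairing K \<xi> y) r" unfolding kball_def
        using pairing_in[OF zK s(2)] by simp
      then show "z \<in> s" using r(2) zK s(1) by auto
    qed
    then show ?thesis using S by blast
  qed
qed

lemma open_Sigma:
  assumes "\<And>y. y \<in> W \<Longrightarrow> \<exists>S. finite S \<and> S \<subseteq> Idx \<and> y \<in> basic S \<and> basic S \<subseteq> W"
  shows "W \<in> sigma_sets (Kbar K) BB"
proof -
  have "W = \<Union>{B \<in> BB. B \<subseteq> W}"
  proof
    show "W \<subseteq> \<Union>{B \<in> BB. B \<subseteq> W}"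
    proof
      fix y assume "y \<in> W"
      then obtain S where "finite S" "S \<subseteq> Idx" "y \<in> basic S" "basic S \<subseteq> W" using assms by blast
      then show "y \<in> \<Union>{B \<in> BB. B \<subseteq> W}" unfolding BB_def by blast
    qed
  qed blast
  moreover have "\<Union>{B \<in> BB. B \<subseteq> W} \<in> sigma_sets (Kbar K) BB"
    using BB_countable by (intro sigma_sets_UNION) (auto intro: countable_subset)
  ultimately show ?thesis by simp
qed

theorem main:
  "borel_sets (strong_top K nabs) = borel_sets (weak_top K nabs)
       \<and> borel_sets (weak_top K nabs) = A_sigma K nabs"
proof -
  define \<Sigma> where "\<Sigma> = sigma_sets (Kbar K) BB"
  have s1: "borel_sets (strong_top K nabs) \<subseteq> \<Sigma>"
    unfolding borel_sets_def top_strong \<Sigma>_def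
    using local_strong open_Sigma by (intro sigma_sets_mono) blast
  have w1: "borel_sets (weak_top K nabs) \<subseteq> \<Sigma>"
    unfolding borel_sets_def top_weak \<Sigma>_def
    using local_weak open_Sigma by (intro sigma_sets_mono) blast
  have s2: "\<Sigma> \<subseteq> borel_sets (strong_top K nabs)"
    unfolding borel_sets_def top_strong \<Sigma>_def BB_def
    using basic_strong_open by (intro sigma_sets_mono) auto
  have w2: "\<Sigma> \<subseteq> borel_sets (weak_top K nabs)"
    unfolding borel_sets_def top_weak \<Sigma>_def BB_def
    using basic_weak_open by (intro sigma_sets_mono) auto
  have a1: "\<Sigma> \<subseteq> A_sigma K nabs"
    unfolding \<Sigma>_def BB_def A_sigma_def
    using basic_A unfolding A_sigma_def by (intro sigma_sets_mono) auto
  have gens: "{{y \<in> Kbar K. f y \<in> B} |f B. f \<in> cont_lin_functionals K nabs \<and> B \<in> borel_sets (k_top k a0)}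
       \<subseteq> sigma_sets (Kbar K) {U. openin (strong_top K nabs) U}"
  proof safe
    fix f B assume f: "f \<in> cont_lin_functionals K nabs" and B: "B \<in> borel_sets (k_top k a0)"
    have c: "continuous_map (strong_top K nabs) (k_top k a0) f" using f unfolding cont_lin_functionals_def by blast
    show "{y \<in> Kbar K. f y \<in> B} \<in> sigma_sets (Kbar K) {U. openin (strong_top K nabs) U}"
      using cont_borel[OF c B[unfolded borel_sets_def]] unfolding top_strong .
  qed
  have a2: "A_sigma K nabs \<subseteq> borel_sets (strong_top K nabs)"
  proof -
    have "A_sigma K nabs \<subseteq> sigma_sets (Kbar K) {U. openin (strong_top K nabs) U}"
      unfolding A_sigma_def by (rule sigma_sets_mono[OF gens])
    also have "\<dots> = borel_sets (strong_top K nabs)" unfolding borel_sets_def top_strong ..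
    finally show ?thesis .
  qed
  show ?thesis using s1 w1 s2 w2 a1 a2 by blast
qed

end

theorem proposition3:
  fixes K :: "nat \<Rightarrow> 'a::field_char_0 set"
    and nabs :: "nat \<Rightarrow> 'a \<Rightarrow> real"
  assumes incr: "\<And>n. K n \<subseteq> K (Suc n)"
    and fin: "\<And>n. finite_ext (K 0) (K n)"
    and local: "\<And>n. normalized_local_field (K n) (nabs n)"
    and compat: "\<And>n. \<exists>s>0. \<forall>x\<in>K 0. nabs n x = nabs 0 x powr s"
  shows "borel_sets (strong_top K nabs) = borel_sets (weak_top K nabs)
       \<and> borel_sets (weak_top K nabs) = A_sigma K nabs"
proof -
  have "main_ctx K nabs" using incr fin local compat by (rule main_ctx.intro)
  then show ?thesis by (rule main_ctx.main)
qed

end
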